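(* Let $\mathfrak{a}=(A,d,\star,1)$ be a dg left unital pre-Lie algebra over a field of characteristic $0$ with a weight grading $A\cong\prod_{n\ge0}A^{(n)}$ such that $1\in A^{(0)}$, $A^{(n)}\star A^{(m)}\subset A^{(n+m)}$, and $g=\prod_{n\ge1}A^{(n)}$. Let $\alpha\in A$ be a Maurer–Cartan element in augmented (square-zero) form and $\lambda\in g_0$. Then the flow $t\mapsto e^{t\,\mathrm{ad}_\lambda}(\alpha)$ of the infinitesimal action $\mathrm{ad}_\lambda=[\lambda,-]$ converges at $t=1$, and the resulting gauge action is given by $$\lambda.\alpha=e^{\mathrm{ad}_\lambda}(\alpha)=\left(e^\lambda\star\alpha\right)\circledcirc e^{-\lambda}.$$
   Context: Pre-Lie identity: $(x\star y)\star z-x\star(y\star z)=(-1)^{|y||z|}((x\star z)\star y-x\star(z\star y))$; left unit: $1\star x=x$; Lie bracket $[x,y]=x\star y-(-1)^{|x||y|}y\star x$, so for $\lambda$ of degree $0$, $\mathrm{ad}_\lambda(x)=\lambda\star x-x\star\lambda$ and $e^{t\,\mathrm{ad}_\lambda}=\sum_n t^n\mathrm{ad}_\lambda^n/n!$. Maurer–Cartan elements are taken in augmented form, i.e. degree $-1$ elements $\alpha$ (in the main example $\alpha=\delta+\bar\alpha$ with $\delta$ representing the differential) satisfying the square-zero equation $[\alpha,\alpha]=0$. Pre-Lie exponential $e^\lambda=\sum_n\lambda^{\star n}/n!$ with right-iterated powers $\lambda^{\star n}=(\cdots(\lambda\star\lambda)\star\cdots)\star\lambda$. Symmetric braces: $\{a;\}=a$,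 $\{a;b_1\}=a\star b_1$, $\{a;b_1,\dots,b_n\}=\{\{a;b_1,\dots,b_{n-1}\};b_n\}-\sum_{i=1}^{n-1}\{a;b_1,\dots,\{b_i;b_n\},\dots,b_{n-1}\}$; circle product $a\circledcirc(1+b)=\sum_{n\ge0}\frac1{n!}\{a;b,\dots,b\}$ for $b$ with trivial weight $0$ component. *)

theory Defs
  imports Complex_Main
begin

text \<open>Carrier: the type 'a.  scale: scalar multiplication.  pr: product (written star).
  one: the left unit.  d: the differential (homological degree -1).
  hdeg k: the elements of homological degree k.  wt n: the weight-n part A^(n).
  prj n: the projection of A = prod_n A^(n) onto A^(n).\<close>

definition sgn_deg :: "int \<Rightarrow> 'a::ab_group_add \<Rightarrow> 'a" where
  "sgn_deg k v = (if even k then v else - v)"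

definition wg_dg_preLie ::
  "('k::field_char_0 \<Rightarrow> 'a::ab_group_add \<Rightarrow> 'a) \<Rightarrow> ('a \<Rightarrow> 'a \<Rightarrow> 'a) \<Rightarrow> 'a \<Rightarrow> ('a \<Rightarrow> 'a)
    \<Rightarrow> (int \<Rightarrow> 'a set) \<Rightarrow> (nat \<Rightarrow> 'a set) \<Rightarrow> (nat \<Rightarrow> 'a \<Rightarrow> 'a) \<Rightarrow> bool" where
  "wg_dg_preLie scale pr one d hdeg wt prj \<longleftrightarrow>
     vector_space scale
   \<comment> \<open>bilinear product\<close>
   \<and> (\<forall>x. Vector_Spaces.linear scale scale (pr x))
   \<and> (\<forall>y. Vector_Spaces.linear scale scale (\<lambda>x. pr x y))
   \<comment> \<open>homological grading\<close>
   \<and> (\<forall>k. module.subspace scale (hdeg k))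
   \<and> (\<forall>K c. finite K \<and> (\<forall>k\<in>K. c k \<in> hdeg k) \<and> (\<Sum>k\<in>K. c k) = 0 \<longrightarrow> (\<forall>k\<in>K. c k = 0))
   \<comment> \<open>weight grading: A is the product of the A^(n)\<close>
   \<and> (\<forall>n. module.subspace scale (wt n))
   \<and> (\<forall>n. Vector_Spaces.linear scale scale (prj n))
   \<and> (\<forall>n x. prj n x \<in> wt n)
   \<and> (\<forall>n m x. x \<in> wt m \<longrightarrow> prj n x = (if n = m then x else 0))
   \<and> (\<forall>x y. (\<forall>n. prj n x = prj n y) \<longrightarrow> x = y)
   \<and> (\<forall>f. (\<forall>n. f n \<in> wt n) \<longrightarrow> (\<exists>x. \<forall>n. prj n x = f n))
   \<comment> \<open>compatibility of the two gradings: each A^(n) is the direct sum of its homogeneous parts,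
       and A_k is the product of the A^(n)_k\<close>
   \<and> (\<forall>n x. x \<in> wt n \<longrightarrow> (\<exists>K c. finite K \<and> (\<forall>k\<in>K. c k \<in> wt n \<inter> hdeg k) \<and> x = (\<Sum>k\<in>K. c k)))
   \<and> (\<forall>k n x. x \<in> hdeg k \<longrightarrow> prj n x \<in> hdeg k)
   \<and> (\<forall>k x. (\<forall>n. prj n x \<in> hdeg k) \<longrightarrow> x \<in> hdeg k)
   \<comment> \<open>compatibility of the product with the gradings\<close>
   \<and> (\<forall>p q x y. x \<in> hdeg p \<and> y \<in> hdeg q \<longrightarrow> pr x y \<in> hdeg (p + q))
   \<and> (\<forall>n m x y. x \<in> wt n \<and> y \<in> wt m \<longrightarrow> pr x y \<in> wt (n + m))
   \<and> (\<forall>n x y. prj n (pr x y) = (\<Sum>i\<le>n. pr (prj i x) (prj (n - i) y)))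
   \<comment> \<open>left unit\<close>
   \<and> one \<in> wt 0 \<and> one \<in> hdeg 0
   \<and> (\<forall>x. pr one x = x)
   \<comment> \<open>graded pre-Lie identity\<close>
   \<and> (\<forall>x y z p q. y \<in> hdeg p \<and> z \<in> hdeg q \<longrightarrow>
        pr (pr x y) z - pr x (pr y z) = sgn_deg (p * q) (pr (pr x z) y - pr x (pr z y)))
   \<comment> \<open>differential: degree -1, square zero, weight preserving, derivation\<close>
   \<and> Vector_Spaces.linear scale scale d
   \<and> (\<forall>k x. x \<in> hdeg k \<longrightarrow> d x \<in> hdeg (k - 1))
   \<and> (\<forall>x. d (d x) = 0)
   \<and> (\<forall>n x. prj n (d x) = d (prj n x))
   \<and> (\<forall>p x y. x \<in> hdeg p \<longrightarrow> d (pr x y) = pr (d x) y + sgn_deg p (pr x (d y)))"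

definition lie_br :: "('a::ab_group_add \<Rightarrow> 'a \<Rightarrow> 'a) \<Rightarrow> int \<Rightarrow> int \<Rightarrow> 'a \<Rightarrow> 'a \<Rightarrow> 'a" where
  "lie_br pr p q x y = pr x y - sgn_deg (p * q) (pr y x)"

text \<open>ad_lambda for lambda of degree 0.\<close>
definition ad :: "('a::ab_group_add \<Rightarrow> 'a \<Rightarrow> 'a) \<Rightarrow> 'a \<Rightarrow> 'a \<Rightarrow> 'a" where
  "ad pr l x = pr l x - pr x l"

definition wsums :: "(nat \<Rightarrow> 'a \<Rightarrow> 'a) \<Rightarrow> (nat \<Rightarrow> 'a::ab_group_add) \<Rightarrow> 'a \<Rightarrow> bool" where
  "wsums prj f L \<longleftrightarrow> (\<forall>m. \<exists>N. \<forall>K\<ge>N. prj m (\<Sum>n<K. f n) = prj m L)"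

primrec ppow :: "('a \<Rightarrow> 'a \<Rightarrow> 'a) \<Rightarrow> 'a \<Rightarrow> 'a \<Rightarrow> nat \<Rightarrow> 'a" where
  "ppow pr one l 0 = one"
| "ppow pr one l (Suc n) = (if n = 0 then l else pr (ppow pr one l n) l)"

definition pexp :: "('k::field_char_0 \<Rightarrow> 'a::ab_group_add \<Rightarrow> 'a) \<Rightarrow> ('a \<Rightarrow> 'a \<Rightarrow> 'a) \<Rightarrow> 'a
    \<Rightarrow> (nat \<Rightarrow> 'a \<Rightarrow> 'a) \<Rightarrow> 'a \<Rightarrow> 'a" where
  "pexp scale pr one prj l = (THE L. wsums prj (\<lambda>n. scale (1 / fact n) (ppow pr one l n)) L)"

text \<open>Symmetric braces {a; b_0, ..., b_(n-1)}, arguments given by f 0, ..., f (n-1).\<close>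
primrec brace :: "('a::ab_group_add \<Rightarrow> 'a \<Rightarrow> 'a) \<Rightarrow> nat \<Rightarrow> 'a \<Rightarrow> (nat \<Rightarrow> 'a) \<Rightarrow> 'a" where
  "brace pr 0 a f = a"
| "brace pr (Suc n) a f =
     pr (brace pr n a f) (f n) - (\<Sum>i<n. brace pr n a (f(i := pr (f i) (f n))))"

text \<open>Circle product a \<circledcirc> c where c = 1 + b: sum_n (1/n!) {a; b, ..., b}.\<close>
definition circ :: "('k::field_char_0 \<Rightarrow> 'a::ab_group_add \<Rightarrow> 'a) \<Rightarrow> ('a \<Rightarrow> 'a \<Rightarrow> 'a) \<Rightarrow> 'a
    \<Rightarrow> (nat \<Rightarrow> 'a \<Rightarrow> 'a) \<Rightarrow> 'a \<Rightarrow> 'a \<Rightarrow> 'a" where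
  "circ scale pr one prj a c =
     (THE L. wsums prj (\<lambda>n. scale (1 / fact n) (brace pr n a (\<lambda>_. c - one))) L)"

end

theory Submission
  imports Defs "HOL-Library.FuncSet"
begin


locale PL =
  fixes scale :: "'k::field_char_0 \<Rightarrow> 'a::ab_group_add \<Rightarrow> 'a"
    and pr :: "'a \<Rightarrow> 'a \<Rightarrow> 'a" and one :: 'a
    and hdeg :: "int \<Rightarrow> 'a set" and wt :: "nat \<Rightarrow> 'a set" and prj :: "nat \<Rightarrow> 'a \<Rightarrow> 'a"
  assumes vs: "vector_space scale"
    and pr_linR: "\<And>x. Vector_Spaces.linear scale scale (pr x)"
    and pr_linL: "\<And>y. Vector_Spaces.linear scale scale (\<lambda>x. pr x y)"
    and hsub: "\<And>k. module.subspace scale (hdeg k)"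
    and prj_lin: "\<And>n. Vector_Spaces.linear scale scale (prj n)"
    and prj_wt: "\<And>n x. prj n x \<in> wt n"
    and prj_wt2: "\<And>n m x. x \<in> wt m \<Longrightarrow> prj n x = (if n = m then x else 0)"
    and prj_ext: "\<And>x y. (\<And>n. prj n x = prj n y) \<Longrightarrow> x = y"
    and prj_ex: "\<And>f. (\<And>n. f n \<in> wt n) \<Longrightarrow> \<exists>x. \<forall>n. prj n x = f n"
    and pr_h: "\<And>p q x y. x \<in> hdeg p \<Longrightarrow> y \<in> hdeg q \<Longrightarrow> pr x y \<in> hdeg (p + q)"
    and prj_pr: "\<And>n x y. prj n (pr x y) = (\<Sum>i\<le>n. pr (prj i x) (prj (n - i) y))"
    and one_wt: "one \<in> wt 0" and one_h: "one \<in> hdeg 0"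
    and one_l: "\<And>x. pr one x = x"
    and preLie: "\<And>x y z p q. y \<in> hdeg p \<Longrightarrow> z \<in> hdeg q \<Longrightarrow>
        pr (pr x y) z - pr x (pr y z) = sgn_deg (p * q) (pr (pr x z) y - pr x (pr z y))"
begin

sublocale vector_space scale by (rule vs)

lemma prR: "pr x (u + v) = pr x u + pr x v" "pr x (scale c u) = scale c (pr x u)"
  using pr_linR[of x] unfolding Vector_Spaces.linear_def module_hom_def module_hom_axioms_def by auto
lemma prL: "pr (u + v) y = pr u y + pr v y" "pr (scale c u) y = scale c (pr u y)"
  using pr_linL[of y] unfolding Vector_Spaces.linear_def module_hom_def module_hom_axioms_def by auto
lemma prjl: "prj n (u + v) = prj n u + prj n v" "prj n (scale c u) = scale c (prj n u)"
  using prj_lin[of n] unfolding Vector_Spaces.linear_def module_hom_def module_hom_axioms_def by auto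

interpretation prR_add: additive "pr x" by standard (rule prR)
interpretation prL_add: additive "\<lambda>u. pr u y" by standard (rule prL)
interpretation prj_add: additive "prj n" by standard (rule prjl)

lemma pr_simps [simp]:
  "pr x 0 = 0" "pr 0 y = 0" "pr x (- u) = - pr x u" "pr (- u) y = - pr u y"
  "pr x (u - v) = pr x u - pr x v" "pr (u - v) y = pr u y - pr v y"
  "pr x (sum f A) = (\<Sum>a\<in>A. pr x (f a))" "pr (sum f A) y = (\<Sum>a\<in>A. pr (f a) y)"
  "prj n 0 = 0" "prj n (- u) = - prj n u" "prj n (u - v) = prj n u - prj n v"
  "prj n (sum f A) = (\<Sum>a\<in>A. prj n (f a))"
  by (simp_all add: prR_add.zero prL_add.zero prR_add.minus prL_add.minus prR_add.diff prL_add.diff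
     prR_add.sum prL_add.sum prj_add.zero prj_add.minus prj_add.diff prj_add.sum)

lemmas lin_simps [simp] = prR(1) prL(1) prjl(1) prR(2) prL(2) prjl(2)

lemma sgn0 [simp]: "sgn_deg 0 v = v" by (simp add: sgn_deg_def)

lemma preLie0: "y \<in> hdeg 0 \<Longrightarrow> z \<in> hdeg q \<Longrightarrow>
        pr (pr x y) z - pr x (pr y z) = pr (pr x z) y - pr x (pr z y)"
  using preLie[of y 0 z q x] by simp

lemma h0: "0 \<in> hdeg k" using hsub[of k] by (simp add: subspace_0)
lemma h_add: "x \<in> hdeg k \<Longrightarrow> y \<in> hdeg k \<Longrightarrow> x + y \<in> hdeg k" using hsub[of k] by (simp add: subspace_add)
lemma h_scale: "x \<in> hdeg k \<Longrightarrow> scale c x \<in> hdeg k" using hsub[of k] by (simp add: subspace_scale)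
lemma h_neg: "x \<in> hdeg k \<Longrightarrow> - x \<in> hdeg k" using hsub[of k] by (simp add: subspace_neg)
lemma h_diff: "x \<in> hdeg k \<Longrightarrow> y \<in> hdeg k \<Longrightarrow> x - y \<in> hdeg k" using hsub[of k] by (simp add: subspace_diff)
lemma h_sum: "(\<And>a. a \<in> A \<Longrightarrow> f a \<in> hdeg k) \<Longrightarrow> sum f A \<in> hdeg k" using hsub[of k] by (simp add: subspace_sum)
lemma pr_h0: "x \<in> hdeg 0 \<Longrightarrow> y \<in> hdeg 0 \<Longrightarrow> pr x y \<in> hdeg 0" using pr_h[of x 0 y 0] by simp
lemma pr_h0m: "x \<in> hdeg 0 \<Longrightarrow> y \<in> hdeg k \<Longrightarrow> pr x y \<in> hdeg k" using pr_h[of x 0 y k] by simp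
lemma pr_hm0: "x \<in> hdeg k \<Longrightarrow> y \<in> hdeg 0 \<Longrightarrow> pr x y \<in> hdeg k" using pr_h[of x k y 0] by simp

definition eqm :: "nat \<Rightarrow> 'a \<Rightarrow> 'a \<Rightarrow> bool" where
  "eqm M x y \<longleftrightarrow> (\<forall>j\<le>M. prj j x = prj j y)"
definition hi :: "nat \<Rightarrow> 'a \<Rightarrow> bool" where
  "hi r x \<longleftrightarrow> (\<forall>j<r. prj j x = 0)"

lemma eqm_refl [simp]: "eqm M x x" by (simp add: eqm_def)
lemma eqm_sym: "eqm M x y \<Longrightarrow> eqm M y x" by (simp add: eqm_def)
lemma eqm_trans: "eqm M x y \<Longrightarrow> eqm M y z \<Longrightarrow> eqm M x z" by (simp add: eqm_def)
lemma eqm_add: "eqm M x x' \<Longrightarrow> eqm M y y' \<Longrightarrow> eqm M (x + y) (x' + y')" by (simp add: eqm_def)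
lemma eqm_diff: "eqm M x x' \<Longrightarrow> eqm M y y' \<Longrightarrow> eqm M (x - y) (x' - y')" by (simp add: eqm_def)
lemma eqm_scale: "eqm M x x' \<Longrightarrow> eqm M (scale c x) (scale c x')" by (simp add: eqm_def)
lemma eqm_sum: "(\<And>a. a \<in> A \<Longrightarrow> eqm M (f a) (g a)) \<Longrightarrow> eqm M (sum f A) (sum g A)"
  by (simp add: eqm_def)
lemma eqm_pr: "eqm M x x' \<Longrightarrow> eqm M y y' \<Longrightarrow> eqm M (pr x y) (pr x' y')"
  unfolding eqm_def prj_pr by (intro allI impI sum.cong refl) auto
lemma eqm_0: "eqm M x 0 \<longleftrightarrow> hi (Suc M) x" by (auto simp: eqm_def hi_def)

lemma hi_0 [simp]: "hi 0 x" by (simp add: hi_def)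
lemma hi_zero [simp]: "hi r 0" by (simp add: hi_def)
lemma hi_mono: "hi r x \<Longrightarrow> s \<le> r \<Longrightarrow> hi s x" by (simp add: hi_def)
lemma hi_add: "hi r x \<Longrightarrow> hi r y \<Longrightarrow> hi r (x + y)" by (simp add: hi_def)
lemma hi_diff: "hi r x \<Longrightarrow> hi r y \<Longrightarrow> hi r (x - y)" by (simp add: hi_def)
lemma hi_neg: "hi r x \<Longrightarrow> hi r (- x)" by (simp add: hi_def)
lemma hi_scale: "hi r x \<Longrightarrow> hi r (scale c x)" by (simp add: hi_def)
lemma hi_sum: "(\<And>a. a \<in> A \<Longrightarrow> hi r (f a)) \<Longrightarrow> hi r (sum f A)" by (simp add: hi_def)
lemma hi_pr: "hi r x \<Longrightarrow> hi s y \<Longrightarrow> hi (r + s) (pr x y)"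
  unfolding hi_def prj_pr
proof (intro allI impI sum.neutral ballI)
  fix j i assume h: "\<forall>j<r. prj j x = 0" "\<forall>j<s. prj j y = 0" "j < r + s" "i \<in> {..j}"
  show "pr (prj i x) (prj (j - i) y) = 0"
  proof (cases "i < r")
    case True then show ?thesis using h by simp
  next
    case False then have "j - i < s" using h by auto
    then show ?thesis using h by simp
  qed
qed

end

context PL begin
lemma brace_cong: "(\<And>i. i < n \<Longrightarrow> f i = g i) \<Longrightarrow> brace pr n a f = brace pr n a g"
proof (induction n arbitrary: f g)
  case 0 then show ?case by simp
next
  case (Suc n)
  have 1: "brace pr n a f = brace pr n a g" by (rule Suc.IH) (simp add: Suc.prems)
  have fn: "f n = g n" by (simp add: Suc.prems)
  have 2: "(\<Sum>i<n. brace pr n a (f(i := pr (f i) (g n)))) = (\<Sum>i<n. brace pr n a (g(i := pr (g i) (g n))))"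
    by (rule sum.cong[OF refl], rule Suc.IH) (simp add: Suc.prems)
  show ?case unfolding brace.simps 1 fn 2 ..
qed

lemma brace_upd_high: "n \<le> j \<Longrightarrow> brace pr n a (f(j := x)) = brace pr n a f"
  by (rule brace_cong) auto

lemma brace_Suc_last: "brace pr (Suc n) a (f(n := v)) =
   pr (brace pr n a f) v - (\<Sum>j<n. brace pr n a (f(j := pr (f j) v)))"
proof -
  have 1: "brace pr n a (f(n := v)) = brace pr n a f" by (rule brace_upd_high) simp
  have 2: "(\<Sum>j<n. brace pr n a ((f(n := v))(j := pr ((f(n := v)) j) v))) = (\<Sum>j<n. brace pr n a (f(j := pr (f j) v)))"
    by (rule sum.cong[OF refl], rule brace_cong) auto
  show ?thesis unfolding brace.simps 1 fun_upd_same 2 ..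
qed

lemma lin_helper: "scale c A + scale e B - (\<Sum>j\<in>J. scale c (a j) + scale e (b j)) = scale c (A - sum a J) + scale e (B - sum b J)"
  by (simp add: sum.distrib scale_sum_right scale_right_diff_distrib algebra_simps)

lemma if_lin: "(if P then scale c A + scale e B else scale c C + scale e D) = scale c (if P then A else C) + scale e (if P then B else D)"
  by simp

lemma brace_lin:
  assumes "i < n"
  shows "brace pr n a (f(i := scale c x + scale e y)) =
         scale c (brace pr n a (f(i := x))) + scale e (brace pr n a (f(i := y)))"
  using assms
proof (induction n arbitrary: f i c e x y)
  case 0 then show ?case by simp
next
  case (Suc n)
  show ?case
  proof (cases "i = n")
    case True
    have t: "(\<Sum>j<n. brace pr n a (f(j := pr (f j) (scale c x + scale e y))))
       = (\<Sum>j<n. scale c (brace pr n a (f(j := pr (f j) x))) + scale e (brace pr n a (f(j := pr (f j) y))))"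
    proof (rule sum.cong[OF refl])
      fix j assume "j \<in> {..<n}"
      then show "brace pr n a (f(j := pr (f j) (scale c x + scale e y))) =
        scale c (brace pr n a (f(j := pr (f j) x))) + scale e (brace pr n a (f(j := pr (f j) y)))"
        using Suc.IH[of j f c "pr (f j) x" e "pr (f j) y"] by (simp only: prR lessThan_iff)
    qed
    have "brace pr (Suc n) a (f(i := scale c x + scale e y)) =
       pr (brace pr n a f) (scale c x + scale e y) - (\<Sum>j<n. brace pr n a (f(j := pr (f j) (scale c x + scale e y))))"
      unfolding True by (rule brace_Suc_last)
    also have "\<dots> = scale c (pr (brace pr n a f) x) + scale e (pr (brace pr n a f) y)
         - (\<Sum>j<n. scale c (brace pr n a (f(j := pr (f j) x))) + scale e (brace pr n a (f(j := pr (f j) y))))"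
      unfolding t by (simp only: prR)
    also have "\<dots> = scale c (pr (brace pr n a f) x - (\<Sum>j<n. brace pr n a (f(j := pr (f j) x))))
       + scale e (pr (brace pr n a f) y - (\<Sum>j<n. brace pr n a (f(j := pr (f j) y))))"
      by (rule lin_helper)
    also have "\<dots> = scale c (brace pr (Suc n) a (f(i := x))) + scale e (brace pr (Suc n) a (f(i := y)))"
      unfolding True brace_Suc_last ..
    finally show ?thesis .
  next
    case False
    then have i: "i < n" using Suc.prems by simp
    have h: "(f(i := z)) n = f n" for z using i by simp
    have t: "brace pr n a ((f(i := z))(j := pr ((f(i := z)) j) (f n)))
       = (if j = i then brace pr n a (f(i := pr z (f n))) else brace pr n a ((f(j := pr (f j) (f n)))(i := z)))"
      for j z
      by (cases "j = i") (simp_all add: fun_upd_twist)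
    have s: "(\<Sum>j<n. brace pr n a ((f(i := z))(j := pr ((f(i := z)) j) (f n))))
      = (\<Sum>j<n. (if j = i then brace pr n a (f(i := pr z (f n))) else brace pr n a ((f(j := pr (f j) (f n)))(i := z))))"
      for z unfolding t ..
    have t2: "(if j = i then brace pr n a (f(i := pr (scale c x + scale e y) (f n))) else brace pr n a ((f(j := pr (f j) (f n)))(i := scale c x + scale e y)))
      = scale c (if j = i then brace pr n a (f(i := pr x (f n))) else brace pr n a ((f(j := pr (f j) (f n)))(i := x)))
      + scale e (if j = i then brace pr n a (f(i := pr y (f n))) else brace pr n a ((f(j := pr (f j) (f n)))(i := y)))"
      for j
    proof (cases "j = i")
      case True then show ?thesis using Suc.IH[OF i, of f c "pr x (f n)" e "pr y (f n)"] by (simp del: fun_upd_apply)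
    next
      case False then show ?thesis using Suc.IH[OF i, of "f(j := pr (f j) (f n))" c x e y] by (simp only: if_False)
    qed
    have "brace pr (Suc n) a (f(i := scale c x + scale e y)) =
        pr (brace pr n a (f(i := scale c x + scale e y))) (f n)
        - (\<Sum>j<n. (if j = i then brace pr n a (f(i := pr (scale c x + scale e y) (f n)))
                 else brace pr n a ((f(j := pr (f j) (f n)))(i := scale c x + scale e y))))"
      unfolding brace.simps h s ..
    also have "\<dots> = scale c (pr (brace pr n a (f(i := x))) (f n)) + scale e (pr (brace pr n a (f(i := y))) (f n))
        - (\<Sum>j<n. scale c (if j = i then brace pr n a (f(i := pr x (f n)))
                 else brace pr n a ((f(j := pr (f j) (f n)))(i := x)))
             + scale e (if j = i then brace pr n a (f(i := pr y (f n)))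
                 else brace pr n a ((f(j := pr (f j) (f n)))(i := y))))"
      unfolding Suc.IH[OF i] prL if_lin ..
    also have "\<dots> = scale c (pr (brace pr n a (f(i := x))) (f n) - (\<Sum>j<n. (if j = i then brace pr n a (f(i := pr x (f n)))
                 else brace pr n a ((f(j := pr (f j) (f n)))(i := x)))))
        + scale e (pr (brace pr n a (f(i := y))) (f n) - (\<Sum>j<n. (if j = i then brace pr n a (f(i := pr y (f n)))
                 else brace pr n a ((f(j := pr (f j) (f n)))(i := y)))))"
      by (rule lin_helper)
    also have "\<dots> = scale c (brace pr (Suc n) a (f(i := x))) + scale e (brace pr (Suc n) a (f(i := y)))"
      unfolding brace.simps h s ..
    finally show ?thesis .
  qed
qed

lemma brace_add: "i < n \<Longrightarrow> brace pr n a (f(i := x + y)) = brace pr n a (f(i := x)) + brace pr n a (f(i := y))"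
  using brace_lin[of i n a f 1 x 1 y] by simp

lemma brace_scale: "i < n \<Longrightarrow> brace pr n a (f(i := scale c x)) = scale c (brace pr n a (f(i := x)))"
  using brace_lin[of i n a f c x 0 x] by simp

lemma brace_zero: "i < n \<Longrightarrow> brace pr n a (f(i := 0)) = 0"
  using brace_lin[of i n a f 0 0 0 0] by (metis add.right_neutral scale_zero_left)

lemma brace_sum:
  assumes "i < n" "finite K"
  shows "brace pr n a (f(i := (\<Sum>k\<in>K. w k))) = (\<Sum>k\<in>K. brace pr n a (f(i := w k)))"
  using assms(2)
proof (induction K rule: finite_induct)
  case empty then show ?case using brace_zero[OF assms(1)] by (simp only: sum.empty)
next
  case (insert k K) then show ?case by (simp only: sum.insert[OF insert.hyps] brace_add[OF assms(1)] insert.IH)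
qed

lemma sum_upd_add: "(i::nat) < n \<Longrightarrow> (\<Sum>j<n. (r(i := r i + t)) j) = (\<Sum>j<n. r j) + (t::nat)"
proof -
  assume i: "i < n"
  have "(\<Sum>j<n. (r(i := r i + t)) j) = (\<Sum>j<n. r j + (if j = i then t else 0))"
    by (rule sum.cong) auto
  also have "\<dots> = (\<Sum>j<n. r j) + t" using i by (simp add: sum.distrib)
  finally show ?thesis .
qed

lemma brace_hi: "(\<And>i. i < n \<Longrightarrow> hi (r i) (f i)) \<Longrightarrow> hi s a \<Longrightarrow> hi (s + (\<Sum>i<n. r i)) (brace pr n a f)"
proof (induction n arbitrary: f r)
  case 0 then show ?case by simp
next
  case (Suc n)
  have 1: "hi (s + (\<Sum>i<n. r i) + r n) (pr (brace pr n a f) (f n))"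
    by (rule hi_pr) (rule Suc.IH, use Suc.prems in auto)
  have 2: "hi (s + (\<Sum>i<n. r i) + r n) (brace pr n a (f(i := pr (f i) (f n))))" if "i \<in> {..<n}" for i
  proof -
    have "hi (s + (\<Sum>j<n. (r(i := r i + r n)) j)) (brace pr n a (f(i := pr (f i) (f n))))"
    proof (rule Suc.IH)
      fix j assume j: "j < n"
      show "hi ((r(i := r i + r n)) j) ((f(i := pr (f i) (f n))) j)"
      proof (cases "j = i")
        case True then show ?thesis using j by (simp add: Suc.prems hi_pr)
      next
        case False then show ?thesis using j by (simp add: Suc.prems)
      qed
    qed (rule Suc.prems)
    then show ?thesis using that sum_upd_add[of i n r "r n"] by (simp add: add.assoc del: fun_upd_apply)
  qed
  show ?case unfolding brace.simps using 1 2 by (auto intro!: hi_diff hi_sum simp: add.assoc)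
qed

end

context PL begin

definition Expr :: "nat \<Rightarrow> 'a \<Rightarrow> (nat \<Rightarrow> 'a) \<Rightarrow> 'a \<Rightarrow> 'a \<Rightarrow> 'a" where
  "Expr m a f x y =
    (pr (pr (brace pr m a f) x) y - pr (brace pr m a f) (pr x y))
    - (\<Sum>j<m. pr (brace pr m a (f(j := pr (f j) x))) y)
    - (\<Sum>j<m. pr (brace pr m a (f(j := pr (f j) y))) x)
    + (\<Sum>i<m. brace pr m a (f(i := pr (pr (f i) y) x + pr (f i) (pr x y))))
    + (\<Sum>i<m. \<Sum>j\<in>{..<m} - {i}. brace pr m a (f(i := pr (f i) y, j := pr (f j) x)))"

lemma brace_Expr:
  "brace pr (Suc (Suc m)) a (f(m := x, Suc m := y)) = Expr m a f x y"
proof -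
  let ?X = "brace pr m a f"
  let ?B = "\<lambda>j u. brace pr m a (f(j := u))"
  let ?D = "\<lambda>i j. brace pr m a (f(i := pr (f i) y, j := pr (f j) x))"
  have s1: "brace pr (Suc (Suc m)) a (f(m := x, Suc m := y)) =
     pr (brace pr (Suc m) a (f(m := x))) y - (\<Sum>i<Suc m. brace pr (Suc m) a ((f(m := x))(i := pr ((f(m := x)) i) y)))"
    by (rule brace_Suc_last)
  have s2: "brace pr (Suc m) a (f(m := x)) = pr ?X x - (\<Sum>j<m. ?B j (pr (f j) x))"
    by (rule brace_Suc_last)
  have s3: "brace pr (Suc m) a ((f(m := x))(m := pr ((f(m := x)) m) y)) = pr ?X (pr x y) - (\<Sum>j<m. ?B j (pr (f j) (pr x y)))"
    using brace_Suc_last[of m a f "pr x y"] by simp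
  have s4: "brace pr (Suc m) a ((f(m := x))(i := pr ((f(m := x)) i) y)) =
      pr (?B i (pr (f i) y)) x - (?B i (pr (pr (f i) y) x) + (\<Sum>j\<in>{..<m} - {i}. ?D i j))"
    if i: "i < m" for i
  proof -
    have e: "(f(m := x))(i := pr ((f(m := x)) i) y) = (f(i := pr (f i) y))(m := x)"
      using i by (auto simp: fun_upd_twist)
    have "brace pr (Suc m) a ((f(i := pr (f i) y))(m := x)) =
       pr (?B i (pr (f i) y)) x - (\<Sum>j<m. brace pr m a ((f(i := pr (f i) y))(j := pr ((f(i := pr (f i) y)) j) x)))"
      by (rule brace_Suc_last)
    also have "(\<Sum>j<m. brace pr m a ((f(i := pr (f i) y))(j := pr ((f(i := pr (f i) y)) j) x)))
       = brace pr m a ((f(i := pr (f i) y))(i := pr ((f(i := pr (f i) y)) i) x))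
         + (\<Sum>j\<in>{..<m} - {i}. brace pr m a ((f(i := pr (f i) y))(j := pr ((f(i := pr (f i) y)) j) x)))"
      by (rule sum.remove) (use i in auto)
    also have "brace pr m a ((f(i := pr (f i) y))(i := pr ((f(i := pr (f i) y)) i) x)) = ?B i (pr (pr (f i) y) x)"
      by simp
    also have "(\<Sum>j\<in>{..<m} - {i}. brace pr m a ((f(i := pr (f i) y))(j := pr ((f(i := pr (f i) y)) j) x)))
        = (\<Sum>j\<in>{..<m} - {i}. ?D i j)"
      by (rule sum.cong) auto
    finally show ?thesis unfolding e .
  qed
  have s5: "(\<Sum>i<Suc m. brace pr (Suc m) a ((f(m := x))(i := pr ((f(m := x)) i) y)))
     = (\<Sum>i<m. pr (?B i (pr (f i) y)) x - (?B i (pr (pr (f i) y) x) + (\<Sum>j\<in>{..<m} - {i}. ?D i j)))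
       + (pr ?X (pr x y) - (\<Sum>j<m. ?B j (pr (f j) (pr x y))))"
  proof -
    have s45: "(\<Sum>i<m. brace pr (Suc m) a ((f(m := x))(i := pr ((f(m := x)) i) y)))
      = (\<Sum>i<m. pr (?B i (pr (f i) y)) x - (?B i (pr (pr (f i) y) x) + (\<Sum>j\<in>{..<m} - {i}. ?D i j)))"
      by (rule sum.cong[OF refl], rule s4) simp
    show ?thesis unfolding sum.lessThan_Suc s3 s45 ..
  qed
  have s6: "?B i (pr (pr (f i) y) x + pr (f i) (pr x y)) = ?B i (pr (pr (f i) y) x) + ?B i (pr (f i) (pr x y))"
    if "i < m" for i using brace_add[OF that] by blast
  have s7: "(\<Sum>i<m. ?B i (pr (pr (f i) y) x + pr (f i) (pr x y))) =
     (\<Sum>i<m. ?B i (pr (pr (f i) y) x)) + (\<Sum>i<m. ?B i (pr (f i) (pr x y)))"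
    by (simp only: sum.distrib[symmetric]) (rule sum.cong[OF refl], simp add: s6)
  show ?thesis
    unfolding s1 s2 s5 Expr_def s7
    by (simp add: sum.distrib sum_subtractf algebra_simps)
qed


lemma offdiag_swap: fixes m :: nat and g :: "nat \<Rightarrow> nat \<Rightarrow> 'a" shows "(\<Sum>i<m. \<Sum>j\<in>{..<m} - {i}. g i j) = (\<Sum>i<m. \<Sum>j\<in>{..<m} - {i}. g j i)"
proof -
  have e: "(\<Sum>j\<in>{..<m} - {i}. h j) = (\<Sum>j<m. if j = i then 0 else h j)" if "i < m" for i :: nat and h :: "nat \<Rightarrow> 'a"
  proof -
    have "(\<Sum>j<m. if j = i then 0 else h j) = (\<Sum>j\<in>{..<m} - {i}. if j = i then 0 else h j)"
      by (rule sum.mono_neutral_right) auto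
    also have "\<dots> = (\<Sum>j\<in>{..<m} - {i}. h j)" by (rule sum.cong) auto
    finally show ?thesis by simp
  qed
  have "(\<Sum>i<m. \<Sum>j\<in>{..<m} - {i}. g i j) = (\<Sum>i<m. \<Sum>j<m. if j = i then 0 else g i j)"
    by (rule sum.cong[OF refl]) (simp add: e)
  also have "\<dots> = (\<Sum>j<m. \<Sum>i<m. if j = i then 0 else g i j)" by (rule sum.swap)
  also have "\<dots> = (\<Sum>i<m. \<Sum>j<m. if j = i then 0 else g j i)"
    by (rule sum.cong[OF refl], rule sum.cong[OF refl]) auto
  also have "\<dots> = (\<Sum>i<m. \<Sum>j\<in>{..<m} - {i}. g j i)"
    by (rule sum.cong[OF refl]) (simp add: e)
  finally show ?thesis .
qed

lemma Expr_sym: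
  assumes f: "\<And>k. f k \<in> hdeg 0" and x: "x \<in> hdeg 0" and y: "y \<in> hdeg 0"
  shows "Expr m a f x y = Expr m a f y x"
proof -
  have 1: "pr (pr (brace pr m a f) x) y - pr (brace pr m a f) (pr x y)
        = pr (pr (brace pr m a f) y) x - pr (brace pr m a f) (pr y x)"
    by (rule preLie0[OF x y])
  have 2: "pr (pr (f i) y) x + pr (f i) (pr x y) = pr (pr (f i) x) y + pr (f i) (pr y x)" for i
  proof -
    have "pr (pr (f i) y) x - pr (f i) (pr y x) = pr (pr (f i) x) y - pr (f i) (pr x y)"
      by (rule preLie0[OF y x])
    then show ?thesis by (simp add: algebra_simps)
  qed
  have 3: "(\<Sum>i<m. \<Sum>j\<in>{..<m} - {i}. brace pr m a (f(i := pr (f i) y, j := pr (f j) x)))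
     = (\<Sum>i<m. \<Sum>j\<in>{..<m} - {i}. brace pr m a (f(i := pr (f i) x, j := pr (f j) y)))"
    apply (subst offdiag_swap)
    apply (rule sum.cong[OF refl], rule sum.cong[OF refl])
    apply (simp add: fun_upd_twist)
    done
  show ?thesis unfolding Expr_def 1 2 3 by (simp add: algebra_simps)
qed

definition sw :: "nat \<Rightarrow> nat \<Rightarrow> nat \<Rightarrow> nat" where
  "sw i j k = (if k = i then j else if k = j then i else k)"

lemma sw_sw [simp]: "sw i j (sw i j k) = k" by (simp add: sw_def)
lemma sw_bij: "i < n \<Longrightarrow> j < n \<Longrightarrow> bij_betw (sw i j) {..<n} {..<n}"
  by (rule bij_betwI[where g = "sw i j"]) (auto simp: sw_def)

lemma brace_swap_last:
  assumes f: "\<And>k. f k \<in> hdeg 0"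
  shows "brace pr (Suc (Suc m)) a (f \<circ> sw m (Suc m)) = brace pr (Suc (Suc m)) a f"
proof -
  have e1: "f \<circ> sw m (Suc m) = f(m := f (Suc m), Suc m := f m)" by (rule ext) (simp add: sw_def)
  have 1: "brace pr (Suc (Suc m)) a (f \<circ> sw m (Suc m)) = Expr m a f (f (Suc m)) (f m)"
    unfolding e1 by (rule brace_Expr)
  have 2: "brace pr (Suc (Suc m)) a f = Expr m a f (f m) (f (Suc m))"
    using brace_Expr[of m a f "f m" "f (Suc m)"] by (simp only: fun_upd_triv)
  show ?thesis unfolding 1 2 by (rule Expr_sym[OF f f f])
qed


lemma sw_inj: "sw i j k = sw i j l \<longleftrightarrow> k = l" by (metis sw_sw)

lemma brace_fix_last:
  assumes ij: "i < n" "j < n"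
    and IH: "\<And>f. (\<And>k. f k \<in> hdeg 0) \<Longrightarrow> brace pr n a (f \<circ> sw i j) = brace pr n a f"
    and h: "\<And>k. h k \<in> hdeg 0"
  shows "brace pr (Suc n) a (h \<circ> sw i j) = brace pr (Suc n) a h"
proof -
  let ?s = "sw i j"
  have sn: "?s n = n" using ij by (simp add: sw_def)
  let ?G = "\<lambda>k. brace pr n a (h(k := pr (h k) (h n)))"
  have e: "(h \<circ> ?s)(l := pr ((h \<circ> ?s) l) (h n)) = (h(?s l := pr (h (?s l)) (h n))) \<circ> ?s" for l
    by (rule ext) (auto simp: sn sw_inj)
  have t: "brace pr n a ((h \<circ> ?s)(l := pr ((h \<circ> ?s) l) (h n))) = ?G (?s l)" for l
    unfolding e by (rule IH) (simp add: h pr_h0)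
  have "(\<Sum>l<n. brace pr n a ((h \<circ> ?s)(l := pr ((h \<circ> ?s) l) (h n)))) = (\<Sum>l<n. ?G (?s l))"
    unfolding t ..
  also have "\<dots> = (\<Sum>l<n. ?G l)" by (rule sum.reindex_bij_betw[OF sw_bij[OF ij]])
  finally have S: "(\<Sum>l<n. brace pr n a ((h \<circ> ?s)(l := pr ((h \<circ> ?s) l) (h n)))) = (\<Sum>l<n. ?G l)" .
  have B: "brace pr n a (h \<circ> ?s) = brace pr n a h" by (rule IH[OF h])
  have hn: "(h \<circ> ?s) n = h n" by (simp add: sn)
  show ?thesis unfolding brace.simps hn unfolding S B ..
qed

lemma brace_sym_last:
  "i < n \<Longrightarrow> (\<And>k. f k \<in> hdeg 0) \<Longrightarrow> brace pr n a (f \<circ> sw i (n - 1)) = brace pr n a f"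
proof (induction n arbitrary: i f)
  case 0 then show ?case by simp
next
  case (Suc n)
  show ?case
  proof (cases "i = n")
    case True
    have "f \<circ> sw i (Suc n - 1) = f" using True by (auto simp: sw_def)
    then show ?thesis by simp
  next
    case False
    then have i: "i < n" using Suc.prems by simp
    then obtain m where n: "n = Suc m" by (cases n) auto
    show ?thesis
    proof (cases "i = m")
      case True
      show ?thesis unfolding True n diff_Suc_1 by (rule brace_swap_last) (rule Suc.prems)
    next
      case False
      then have im: "i < m" using i n by simp
      have dec: "f \<circ> sw i (Suc n - 1) = ((f \<circ> sw i m) \<circ> sw m (Suc m)) \<circ> sw i m"
        using im n by (auto simp: sw_def)
      have Q: "brace pr (Suc n) a (g \<circ> sw i m) = brace pr (Suc n) a g" if "\<And>k. g k \<in> hdeg 0" for g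
      proof (rule brace_fix_last)
        show "i < n" "m < n" using im n by auto
        show "brace pr n a (g \<circ> sw i m) = brace pr n a g" if "\<And>k. g k \<in> hdeg 0" for g
          using Suc.IH[OF i that] by (simp only: n diff_Suc_1)
      qed (rule that)
      have hf: "\<And>k. f k \<in> hdeg 0" by (rule Suc.prems)
      have "brace pr (Suc n) a (f \<circ> sw i (Suc n - 1)) = brace pr (Suc n) a ((f \<circ> sw i m) \<circ> sw m (Suc m))"
        unfolding dec by (rule Q) (simp add: hf)
      also have "\<dots> = brace pr (Suc n) a (f \<circ> sw i m)"
        unfolding n by (rule brace_swap_last) (simp add: hf)
      also have "\<dots> = brace pr (Suc n) a f" by (rule Q[OF hf])
      finally show ?thesis .
    qed
  qed
qed

end


definition Cset :: "nat \<Rightarrow> nat \<Rightarrow> (nat \<Rightarrow> nat) set" where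
  "Cset n S = {g \<in> PiE {..<n} (\<lambda>_. {1..S}). (\<Sum>i<n. g i) = S}"

lemma Cset_finite: "finite (Cset n S)"
  unfolding Cset_def by (rule finite_subset[of _ "PiE {..<n} (\<lambda>_. {1..S})"]) (auto intro: finite_PiE)

lemma Cset_two: "g \<in> Cset n S \<Longrightarrow> i < n \<Longrightarrow> j < n \<Longrightarrow> i \<noteq> j \<Longrightarrow> g i + g j \<le> S"
proof -
  assume g: "g \<in> Cset n S" and ij: "i < n" "j < n" "i \<noteq> j"
  have "g i + g j = (\<Sum>k\<in>{i, j}. g k)" using ij by simp
  also have "\<dots> \<le> (\<Sum>k<n. g k)" by (rule sum_mono2) (use ij in auto)
  also have "\<dots> = S" using g by (simp add: Cset_def)
  finally show ?thesis .
qed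

lemma Cset_empty: "S < n \<Longrightarrow> Cset n S = {}"
proof (rule ccontr)
  assume "S < n" "Cset n S \<noteq> {}"
  then obtain g where g: "g \<in> Cset n S" by auto
  then have "(\<Sum>i<n. (1::nat)) \<le> (\<Sum>i<n. g i)" by (intro sum_mono) (auto simp: Cset_def PiE_def Pi_def)
  then show False using g \<open>S < n\<close> by (simp add: Cset_def)
qed

lemma Cset_00: "Cset 0 0 = {\<lambda>_. undefined}"
  by (auto simp: Cset_def PiE_def extensional_def)

lemma Cset_0S: "0 < S \<Longrightarrow> Cset 0 S = {}"
  by (auto simp: Cset_def)

lemma Cset_mem: "g \<in> Cset n S \<longleftrightarrow> (\<forall>i<n. 1 \<le> g i \<and> g i \<le> S) \<and> (\<forall>i. n \<le> i \<longrightarrow> g i = undefined) \<and> (\<Sum>i<n. g i) = S"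
  by (auto simp: Cset_def PiE_def Pi_def extensional_def)

context PL begin

lemma ppow_Suc: "ppow pr one l (Suc n) = pr (ppow pr one l n) l"
  by (cases n) (simp_all add: one_l)

lemma ppow_h: "l \<in> hdeg 0 \<Longrightarrow> ppow pr one l n \<in> hdeg 0"
  by (induction n) (simp_all add: one_h ppow_Suc pr_h0 del: ppow.simps(2))

lemma ppow_hi: "hi 1 l \<Longrightarrow> hi n (ppow pr one l n)"
proof (induction n)
  case 0 then show ?case by simp
next
  case (Suc n) then show ?case unfolding ppow_Suc using hi_pr[of n _ 1 l] by simp
qed

definition Wt :: "'a \<Rightarrow> nat \<Rightarrow> 'a" where
  "Wt l k = scale (1 / fact k) (ppow pr one l k)"

lemma Wt_1: "Wt l 1 = l" by (simp add: Wt_def)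
lemma Wt_Suc0: "Wt l (Suc 0) = l" by (simp add: Wt_def)

lemma Wt_Suc: "pr (Wt l k) l = scale (of_nat (Suc k)) (Wt l (Suc k))"
proof -
  have "pr (Wt l k) l = scale (1 / fact k) (ppow pr one l (Suc k))"
    by (simp add: Wt_def ppow_Suc del: ppow.simps)
  also have "(1 / fact k :: 'k) = of_nat (Suc k) * (1 / fact (Suc k))"
  proof -
    have f: "(fact (Suc k)::'k) = of_nat (Suc k) * fact k" by (rule fact_Suc)
    have "(of_nat (Suc k)::'k) \<noteq> 0" by (rule of_nat_neq_0)
    then show ?thesis unfolding f by simp
  qed
  finally show ?thesis by (simp add: Wt_def del: ppow.simps)
qed

lemma Wt_h: "l \<in> hdeg 0 \<Longrightarrow> Wt l k \<in> hdeg 0" by (simp add: Wt_def ppow_h h_scale del: ppow.simps)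

lemma Wt_hi: "hi 1 l \<Longrightarrow> hi k (Wt l k)" by (simp add: Wt_def ppow_hi hi_scale del: ppow.simps)


definition Bg :: "'a \<Rightarrow> nat \<Rightarrow> 'a \<Rightarrow> (nat \<Rightarrow> nat) \<Rightarrow> 'a" where
  "Bg l n a g = brace pr n a (\<lambda>i. Wt l (g i))"

lemma sumX:
  assumes i: "i < n"
  shows "(\<Sum>g\<in>{g\<in>Cset n (Suc N). g i \<noteq> 1}. scale (of_nat (g i)) (Bg l n a g))
       = (\<Sum>g\<in>Cset n N. scale (of_nat (Suc (g i))) (Bg l n a (g(i := Suc (g i)))))"
proof -
  let ?phi = "\<lambda>g::nat\<Rightarrow>nat. g(i := Suc (g i))"
  let ?psi = "\<lambda>g::nat\<Rightarrow>nat. g(i := g i - 1)"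
  let ?T = "{g\<in>Cset n (Suc N). g i \<noteq> 1}"
  have bij: "bij_betw ?phi (Cset n N) ?T"
  proof (rule bij_betwI[where g = ?psi])
    show "?phi \<in> Cset n N \<rightarrow> ?T"
    proof
      fix g assume g: "g \<in> Cset n N"
      have s: "(\<Sum>j<n. (g(i := g i + 1)) j) = (\<Sum>j<n. g j) + 1" by (rule sum_upd_add[OF i])
      show "?phi g \<in> ?T" using g i s by (auto simp: Cset_mem)
    qed
    show "?psi \<in> ?T \<rightarrow> Cset n N"
    proof
      fix g assume g: "g \<in> ?T"
      then have gi: "2 \<le> g i" using i by (auto simp: Cset_mem)
      have two: "g j \<le> N - 1" if "j < n" "j \<noteq> i" for j
        using Cset_two[of g n "Suc N" i j] g i that gi by auto
      have e: "(?psi g)(i := ?psi g i + 1) = g" using gi by auto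
      have s: "(\<Sum>j<n. ((?psi g)(i := ?psi g i + 1)) j) = (\<Sum>j<n. ?psi g j) + 1" by (rule sum_upd_add[OF i])
      then have s2: "(\<Sum>j<n. ?psi g j) = N" using g unfolding e by (simp add: Cset_mem)
      show "?psi g \<in> Cset n N" unfolding Cset_mem
      proof (intro conjI allI impI)
        fix j assume j: "j < n"
        show "1 \<le> ?psi g j" using g j gi by (auto simp: Cset_mem)
        show "?psi g j \<le> N"
        proof (cases "j = i")
          case True then show ?thesis using g i by (auto simp: Cset_mem)
        next
          case False then show ?thesis using two[OF j] by simp
        qed
      next
        fix j assume "n \<le> j" then show "?psi g j = undefined" using g i by (auto simp: Cset_mem)
      qed (rule s2)
    qed
    show "?psi (?phi g) = g" for g by simp
    show "?phi (?psi g) = g" if "g \<in> ?T" for g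
    proof -
      have "1 \<le> g i" using that i by (auto simp: Cset_mem)
      then show ?thesis by auto
    qed
  qed
  show ?thesis
    using sum.reindex_bij_betw[OF bij, of "\<lambda>g. scale (of_nat (g i)) (Bg l n a g)"] by simp
qed

lemma sumY1:
  assumes i: "i < Suc m" and l: "l \<in> hdeg 0"
  shows "(\<Sum>g\<in>{g\<in>Cset (Suc m) S. g i = 1}. Bg l (Suc m) a g)
       = (\<Sum>g\<in>{g\<in>Cset (Suc m) S. g m = 1}. Bg l (Suc m) a g)"
proof -
  let ?phi = "\<lambda>g::nat\<Rightarrow>nat. g \<circ> sw i m"
  have mem: "?phi g \<in> Cset (Suc m) S" if g: "g \<in> Cset (Suc m) S" for g
  proof -
    have "(\<Sum>j<Suc m. g (sw i m j)) = (\<Sum>j<Suc m. g j)"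
      by (rule sum.reindex_bij_betw[OF sw_bij]) (use i in auto)
    moreover have "sw i m j < Suc m" if "j < Suc m" for j using i that by (auto simp: sw_def)
    moreover have "sw i m j = j" if "Suc m \<le> j" for j using i that by (auto simp: sw_def)
    ultimately show ?thesis using g by (auto simp: Cset_mem)
  qed
  have bij: "bij_betw ?phi {g\<in>Cset (Suc m) S. g m = 1} {g\<in>Cset (Suc m) S. g i = 1}"
  proof (rule bij_betwI[where g = ?phi])
    show "?phi \<in> {g\<in>Cset (Suc m) S. g m = 1} \<rightarrow> {g\<in>Cset (Suc m) S. g i = 1}"
      using mem by (auto simp: sw_def)
    show "?phi \<in> {g\<in>Cset (Suc m) S. g i = 1} \<rightarrow> {g\<in>Cset (Suc m) S. g m = 1}"
      using mem by (auto simp: sw_def)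
  qed (auto simp: fun_eq_iff)
  have B: "Bg l (Suc m) a (?phi g) = Bg l (Suc m) a g" for g
  proof -
    have "Bg l (Suc m) a (?phi g) = brace pr (Suc m) a ((\<lambda>j. Wt l (g j)) \<circ> sw i (Suc m - 1))"
      unfolding Bg_def by (simp add: comp_def)
    also have "\<dots> = Bg l (Suc m) a g" unfolding Bg_def by (rule brace_sym_last[OF i]) (simp add: Wt_h l)
    finally show ?thesis .
  qed
  show ?thesis
    using sum.reindex_bij_betw[OF bij, of "Bg l (Suc m) a"] unfolding B by simp
qed

lemma sumY2:
  "(\<Sum>g\<in>{g\<in>Cset (Suc m) (Suc N). g m = 1}. Bg l (Suc m) a g)
       = (\<Sum>g\<in>Cset m N. brace pr (Suc m) a ((\<lambda>j. Wt l (g j))(m := l)))"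
proof -
  let ?phi = "\<lambda>g::nat\<Rightarrow>nat. g(m := 1)"
  let ?psi = "\<lambda>g::nat\<Rightarrow>nat. g(m := undefined)"
  let ?T = "{g\<in>Cset (Suc m) (Suc N). g m = 1}"
  have bij: "bij_betw ?phi (Cset m N) ?T"
  proof (rule bij_betwI[where g = ?psi])
    show "?phi \<in> Cset m N \<rightarrow> ?T"
    proof
      fix g assume g: "g \<in> Cset m N"
      have "(\<Sum>j<m. (g(m := 1)) j) = (\<Sum>j<m. g j)" by (rule sum.cong) auto
      then show "?phi g \<in> ?T" using g by (auto simp: Cset_mem less_Suc_eq intro: le_SucI)
    qed
    show "?psi \<in> ?T \<rightarrow> Cset m N"
    proof
      fix g assume g: "g \<in> ?T"
      have two: "g j \<le> N" if "j < m" for j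
        using Cset_two[of g "Suc m" "Suc N" j m] g that by auto
      have "(\<Sum>j<m. (g(m := undefined)) j) = (\<Sum>j<m. g j)" by (rule sum.cong) auto
      then show "?psi g \<in> Cset m N" using g two by (auto simp: Cset_mem)
    qed
    show "?psi (?phi g) = g" if "g \<in> Cset m N" for g using that by (auto simp: Cset_mem fun_eq_iff)
    show "?phi (?psi g) = g" if "g \<in> ?T" for g using that by (auto simp: fun_eq_iff)
  qed
  have B: "Bg l (Suc m) a (?phi g) = brace pr (Suc m) a ((\<lambda>j. Wt l (g j))(m := l))" for g
    unfolding Bg_def by (rule arg_cong[where f = "brace pr (Suc m) a"]) (auto simp: Wt_Suc0 fun_eq_iff)
  show ?thesis
    using sum.reindex_bij_betw[OF bij, of "Bg l (Suc m) a"] unfolding B by simp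
qed

end

context PL begin

definition phi :: "'a \<Rightarrow> nat \<Rightarrow> 'a \<Rightarrow> 'a" where
  "phi l N a = (\<Sum>n\<le>N. scale (1 / fact n) (\<Sum>g\<in>Cset n N. Bg l n a g))"

lemma sum_split: "finite A \<Longrightarrow> sum F A = sum F {x\<in>A. P x} + sum F {x\<in>A. \<not> P x}"
  by (subst sum.union_disjoint[symmetric]) (auto intro: sum.cong)

lemma scale_comm: "scale c (scale d x) = scale d (scale c x)"
  by (simp add: mult.commute)

lemma partA:
  "(\<Sum>g\<in>Cset n (Suc N). scale (of_nat (Suc N)) (Bg l n a g)) =
   (\<Sum>i<n. (\<Sum>g\<in>{g\<in>Cset n (Suc N). g i = 1}. Bg l n a g))
   + (\<Sum>i<n. (\<Sum>g\<in>{g\<in>Cset n (Suc N). g i \<noteq> 1}. scale (of_nat (g i)) (Bg l n a g)))"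
proof -
  have 1: "scale (of_nat (Suc N)) (Bg l n a g) = (\<Sum>i<n. scale (of_nat (g i)) (Bg l n a g))"
    if "g \<in> Cset n (Suc N)" for g
  proof -
    have "(of_nat (Suc N) :: 'k) = (\<Sum>i<n. of_nat (g i))" using that by (simp add: Cset_mem flip: of_nat_sum)
    then show ?thesis by (simp add: scale_sum_left)
  qed
  have "(\<Sum>g\<in>Cset n (Suc N). scale (of_nat (Suc N)) (Bg l n a g))
      = (\<Sum>g\<in>Cset n (Suc N). \<Sum>i<n. scale (of_nat (g i)) (Bg l n a g))"
    by (rule sum.cong[OF refl 1])
  also have "\<dots> = (\<Sum>i<n. \<Sum>g\<in>Cset n (Suc N). scale (of_nat (g i)) (Bg l n a g))"
    by (rule sum.swap)
  also have "\<dots> = (\<Sum>i<n. (\<Sum>g\<in>{g\<in>Cset n (Suc N). g i = 1}. scale (of_nat (g i)) (Bg l n a g))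
            + (\<Sum>g\<in>{g\<in>Cset n (Suc N). g i \<noteq> 1}. scale (of_nat (g i)) (Bg l n a g)))"
    by (rule sum.cong[OF refl], rule sum_split[OF Cset_finite])
  also have "\<dots> = (\<Sum>i<n. (\<Sum>g\<in>{g\<in>Cset n (Suc N). g i = 1}. Bg l n a g)
            + (\<Sum>g\<in>{g\<in>Cset n (Suc N). g i \<noteq> 1}. scale (of_nat (g i)) (Bg l n a g)))"
    by (rule sum.cong[OF refl], rule arg_cong2[where f = "(+)"], rule sum.cong) auto
  finally show ?thesis by (simp only: sum.distrib)
qed

lemma partB:
  assumes l: "l \<in> hdeg 0"
  shows "(\<Sum>i<Suc m. (\<Sum>g\<in>{g\<in>Cset (Suc m) (Suc N). g i = 1}. Bg l (Suc m) a g))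
    = scale (of_nat (Suc m)) (\<Sum>g\<in>Cset m N. brace pr (Suc m) a ((\<lambda>j. Wt l (g j))(m := l)))"
proof -
  have "(\<Sum>i<Suc m. (\<Sum>g\<in>{g\<in>Cset (Suc m) (Suc N). g i = 1}. Bg l (Suc m) a g))
     = (\<Sum>i<Suc m. (\<Sum>g\<in>Cset m N. brace pr (Suc m) a ((\<lambda>j. Wt l (g j))(m := l))))"
  proof (rule sum.cong[OF refl])
    fix i assume "i \<in> {..<Suc m}"
    then have i: "i < Suc m" by simp
    show "(\<Sum>g\<in>{g\<in>Cset (Suc m) (Suc N). g i = 1}. Bg l (Suc m) a g)
       = (\<Sum>g\<in>Cset m N. brace pr (Suc m) a ((\<lambda>j. Wt l (g j))(m := l)))"
      unfolding sumY1[OF i l] by (rule sumY2)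
  qed
  then show ?thesis by (simp add: sum_constant_scale)
qed

lemma partD:
  assumes l: "l \<in> hdeg 0"
  shows "pr (Bg l n a g) l = brace pr (Suc n) a ((\<lambda>j. Wt l (g j))(n := l))
     + (\<Sum>i<n. scale (of_nat (Suc (g i))) (Bg l n a (g(i := Suc (g i)))))"
proof -
  let ?F = "\<lambda>j. Wt l (g j)"
  have 1: "brace pr n a (?F(i := pr (?F i) l)) = scale (of_nat (Suc (g i))) (Bg l n a (g(i := Suc (g i))))"
    if "i < n" for i
  proof -
    have "brace pr n a (?F(i := pr (?F i) l)) = brace pr n a (?F(i := scale (of_nat (Suc (g i))) (Wt l (Suc (g i)))))"
      by (simp only: Wt_Suc)
    also have "\<dots> = scale (of_nat (Suc (g i))) (brace pr n a (?F(i := Wt l (Suc (g i)))))"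
      by (rule brace_scale[OF that])
    also have "?F(i := Wt l (Suc (g i))) = (\<lambda>j. Wt l ((g(i := Suc (g i))) j))" by (auto simp: fun_eq_iff)
    finally show ?thesis unfolding Bg_def .
  qed
  have 2: "(\<Sum>i<n. brace pr n a (?F(i := pr (?F i) l))) = (\<Sum>i<n. scale (of_nat (Suc (g i))) (Bg l n a (g(i := Suc (g i)))))"
    by (rule sum.cong[OF refl]) (simp add: 1)
  show ?thesis using brace_Suc_last[of n a ?F l] unfolding 2 Bg_def by simp
qed

lemma phi_step:
  assumes l: "l \<in> hdeg 0"
  shows "scale (of_nat (Suc N)) (phi l (Suc N) a) = pr (phi l N a) l"
proof -
  define S where "S m = (\<Sum>g\<in>Cset m N. brace pr (Suc m) a ((\<lambda>j. Wt l (g j))(m := l)))" for m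
  define X where "X n = (\<Sum>i<n. \<Sum>g\<in>Cset n N. scale (of_nat (Suc (g i))) (Bg l n a (g(i := Suc (g i)))))" for n
  define Y where "Y n = (\<Sum>i<n. (\<Sum>g\<in>{g\<in>Cset n (Suc N). g i = 1}. Bg l n a g))" for n
  have LHS1: "scale (of_nat (Suc N)) (phi l (Suc N) a)
     = (\<Sum>n\<le>Suc N. scale (1 / fact n) (Y n)) + (\<Sum>n\<le>Suc N. scale (1 / fact n) (X n))"
  proof -
    have "scale (of_nat (Suc N)) (phi l (Suc N) a) = (\<Sum>n\<le>Suc N. scale (1 / fact n)
        (\<Sum>g\<in>Cset n (Suc N). scale (of_nat (Suc N)) (Bg l n a g)))"
    proof -
      have "scale (of_nat (Suc N)) (phi l (Suc N) a) = (\<Sum>n\<le>Suc N. scale (of_nat (Suc N)) (scale (1 / fact n)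
        (\<Sum>g\<in>Cset n (Suc N). Bg l n a g)))" unfolding phi_def by (rule scale_sum_right)
      also have "\<dots> = (\<Sum>n\<le>Suc N. scale (1 / fact n) (scale (of_nat (Suc N))
        (\<Sum>g\<in>Cset n (Suc N). Bg l n a g)))" by (rule sum.cong[OF refl], rule scale_comm)
      finally show ?thesis by (simp only: scale_sum_right)
    qed
    also have "\<dots> = (\<Sum>n\<le>Suc N. scale (1 / fact n) (Y n + X n))"
      unfolding partA Y_def X_def
    proof (rule sum.cong[OF refl], rule arg_cong[where f = "scale _"], rule arg_cong2[where f = "(+)"], rule refl,
        rule sum.cong[OF refl])
      fix n i :: nat assume "i \<in> {..<n}"
      then show "(\<Sum>g\<in>{g \<in> Cset n (Suc N). g i \<noteq> 1}. scale (of_nat (g i)) (Bg l n a g)) =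
         (\<Sum>g\<in>Cset n N. scale (of_nat (Suc (g i))) (Bg l n a (g(i := Suc (g i)))))"
        by (intro sumX) simp
    qed
    finally show ?thesis by (simp only: scale_right_distrib sum.distrib)
  qed
  have Y1: "(\<Sum>n\<le>Suc N. scale (1 / fact n) (Y n)) = (\<Sum>m\<le>N. scale (1 / fact m) (S m))"
  proof -
    have ym: "scale (1 / fact (Suc m)) (Y (Suc m)) = scale (1 / fact m) (S m)" for m
    proof -
      have f: "(fact (Suc m)::'k) = of_nat (Suc m) * fact m" by (rule fact_Suc)
      have nz: "(of_nat (Suc m)::'k) \<noteq> 0" by (rule of_nat_neq_0)
      have "Y (Suc m) = scale (of_nat (Suc m)) (S m)" unfolding Y_def S_def by (rule partB[OF l])
      then show ?thesis using nz by (simp add: f)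
    qed
    have y0: "Y 0 = 0" by (simp add: Y_def)
    show ?thesis unfolding sum.atMost_Suc_shift y0 ym by simp
  qed
  have X1: "(\<Sum>n\<le>Suc N. scale (1 / fact n) (X n)) = (\<Sum>n\<le>N. scale (1 / fact n) (X n))"
  proof -
    have "X (Suc N) = 0" by (simp add: X_def Cset_empty)
    then show ?thesis by simp
  qed
  have RHS: "pr (phi l N a) l = (\<Sum>m\<le>N. scale (1 / fact m) (S m)) + (\<Sum>n\<le>N. scale (1 / fact n) (X n))"
  proof -
    have "pr (phi l N a) l = (\<Sum>n\<le>N. scale (1 / fact n) (\<Sum>g\<in>Cset n N. pr (Bg l n a g) l))"
      unfolding phi_def by (simp add: prL)
    also have "\<dots> = (\<Sum>n\<le>N. scale (1 / fact n) (S n + X n))"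
    proof (rule sum.cong[OF refl])
      fix n
      have "(\<Sum>g\<in>Cset n N. pr (Bg l n a g) l) = S n + (\<Sum>g\<in>Cset n N. \<Sum>i<n. scale (of_nat (Suc (g i))) (Bg l n a (g(i := Suc (g i)))))"
        unfolding S_def partD[OF l] by (simp add: sum.distrib)
      also have "\<dots> = S n + X n" unfolding X_def by (simp add: sum.swap[of _ "Cset n N"])
      finally show "scale (1 / fact n) (\<Sum>g\<in>Cset n N. pr (Bg l n a g) l) = scale (1 / fact n) (S n + X n)" by simp
    qed
    finally show ?thesis by (simp only: scale_right_distrib sum.distrib)
  qed
  show ?thesis unfolding LHS1 Y1 X1 RHS ..
qed

lemma phi_0: "phi l 0 a = a"
  by (simp add: phi_def Cset_00 Bg_def)

lemma phi_R: "l \<in> hdeg 0 \<Longrightarrow> phi l N a = scale (1 / fact N) (((\<lambda>x. pr x l) ^^ N) a)"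
proof (induction N)
  case 0 then show ?case by (simp add: phi_0)
next
  case (Suc N)
  have nz: "(of_nat (Suc N)::'k) \<noteq> 0" by (rule of_nat_neq_0)
  have f: "(fact (Suc N)::'k) = of_nat (Suc N) * fact N" by (rule fact_Suc)
  have "phi l (Suc N) a = scale (1 / of_nat (Suc N)) (scale (of_nat (Suc N)) (phi l (Suc N) a))"
    using nz by simp
  also have "\<dots> = scale (1 / of_nat (Suc N)) (pr (phi l N a) l)" by (simp only: phi_step[OF Suc.prems])
  also have "\<dots> = scale (1 / fact (Suc N)) (((\<lambda>x. pr x l) ^^ Suc N) a)"
    using nz by (simp add: Suc.IH[OF Suc.prems] prL f)
  finally show ?case .
qed

end

context PL begin

lemma pascal:
  "(\<Sum>p\<le>N. scale (of_nat (N choose p)) (v p)) + (\<Sum>p\<le>N. scale (of_nat (N choose p)) (v (Suc p)))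
   = (\<Sum>p\<le>Suc N. scale (of_nat (Suc N choose p)) (v p))"
proof -
  have 1: "(\<Sum>p\<le>N. scale (of_nat (N choose p)) (v p)) = (\<Sum>p\<le>Suc N. scale (of_nat (N choose p)) (v p))"
    by (simp add: sum.atMost_Suc)
  also have "\<dots> = v 0 + (\<Sum>p\<le>N. scale (of_nat (N choose Suc p)) (v (Suc p)))"
    unfolding sum.atMost_Suc_shift by simp
  finally have A: "(\<Sum>p\<le>N. scale (of_nat (N choose p)) (v p)) = v 0 + (\<Sum>p\<le>N. scale (of_nat (N choose Suc p)) (v (Suc p)))" .
  have B: "(\<Sum>p\<le>Suc N. scale (of_nat (Suc N choose p)) (v p)) =
      v 0 + ((\<Sum>p\<le>N. scale (of_nat (N choose p)) (v (Suc p))) + (\<Sum>p\<le>N. scale (of_nat (N choose Suc p)) (v (Suc p))))"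
  proof -
    have "(\<Sum>p\<le>Suc N. scale (of_nat (Suc N choose p)) (v p)) = v 0 + (\<Sum>p\<le>N. scale (of_nat (Suc N choose Suc p)) (v (Suc p)))"
      unfolding sum.atMost_Suc_shift by simp
    then show ?thesis by (simp only: binomial_Suc_Suc of_nat_add scale_left_distrib sum.distrib)
  qed
  show ?thesis unfolding A B by (simp add: algebra_simps)
qed

definition Rt :: "'a \<Rightarrow> 'a \<Rightarrow> 'a" where "Rt l x = pr x l"

lemma Rt_pow_add: "(Rt l ^^ n) (x + y) = (Rt l ^^ n) x + (Rt l ^^ n) y"
  by (induction n) (simp_all add: Rt_def)
lemma Rt_pow_scale: "(Rt l ^^ n) (scale c x) = scale c ((Rt l ^^ n) x)"
  by (induction n) (simp_all add: Rt_def)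
lemma Rt_pow_zero: "(Rt l ^^ n) 0 = 0"
  by (induction n) (simp_all add: Rt_def)
lemma Rt_pow_sum: "(Rt l ^^ n) (sum f A) = (\<Sum>a\<in>A. (Rt l ^^ n) (f a))"
  by (induction A rule: infinite_finite_induct) (simp_all add: Rt_pow_add Rt_pow_zero)
lemma Rt_pow_hi: "hi 1 l \<Longrightarrow> hi r x \<Longrightarrow> hi (r + n) ((Rt l ^^ n) x)"
proof (induction n)
  case 0 then show ?case by simp
next
  case (Suc n) then show ?case using hi_pr[of "r + n" _ 1 l] by (simp add: Rt_def)
qed
lemma Rt_pow_one: "(Rt l ^^ q) one = ppow pr one l q"
  by (induction q) (simp_all add: Rt_def ppow_Suc del: ppow.simps(2))

lemma ad_h: "l \<in> hdeg 0 \<Longrightarrow> z \<in> hdeg k \<Longrightarrow> ad pr l z \<in> hdeg k"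
  unfolding ad_def using pr_h0m pr_hm0 by (blast intro: h_diff)

lemma ad_pow_h: "l \<in> hdeg 0 \<Longrightarrow> z \<in> hdeg k \<Longrightarrow> (ad pr l ^^ n) z \<in> hdeg k"
  by (induction n) (simp_all add: ad_h)

lemma adR:
  assumes l: "l \<in> hdeg 0" and al: "alpha \<in> hdeg k"
  shows "pr y ((ad pr l ^^ N) alpha) =
    (\<Sum>p\<le>N. scale (of_nat (N choose p)) ((Rt (- l) ^^ p) (pr ((Rt l ^^ (N - p)) y) alpha)))"
proof (induction N arbitrary: y)
  case 0 then show ?case by simp
next
  case (Suc N)
  let ?z = "(ad pr l ^^ N) alpha"
  have z: "?z \<in> hdeg k" by (rule ad_pow_h[OF l al])
  have key: "pr y (ad pr l ?z) = pr (Rt l y) ?z + Rt (- l) (pr y ?z)"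
  proof -
    have "pr (pr y l) ?z - pr y (pr l ?z) = pr (pr y ?z) l - pr y (pr ?z l)" by (rule preLie0[OF l z])
    then show ?thesis unfolding ad_def Rt_def by (simp add: algebra_simps)
  qed
  define v where "v p = (Rt (- l) ^^ p) (pr ((Rt l ^^ (Suc N - p)) y) alpha)" for p
  have 1: "pr (Rt l y) ?z = (\<Sum>p\<le>N. scale (of_nat (N choose p)) (v p))"
    unfolding Suc.IH v_def
  proof (rule sum.cong[OF refl])
    fix p assume "p \<in> {..N}"
    then have "(Rt l ^^ (N - p)) (Rt l y) = (Rt l ^^ (Suc N - p)) y"
      by (simp add: Suc_diff_le funpow_Suc_right del: funpow.simps)
    then show "scale (of_nat (N choose p)) ((Rt (- l) ^^ p) (pr ((Rt l ^^ (N - p)) (Rt l y)) alpha)) =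
       scale (of_nat (N choose p)) ((Rt (- l) ^^ p) (pr ((Rt l ^^ (Suc N - p)) y) alpha))" by simp
  qed
  have 2: "Rt (- l) (pr y ?z) = (\<Sum>p\<le>N. scale (of_nat (N choose p)) (v (Suc p)))"
    unfolding Suc.IH v_def by (simp add: Rt_def flip: sum_negf)
  show ?case unfolding funpow.simps comp_def key 1 2 pascal unfolding v_def ..
qed

end

context PL begin

lemma brace_eqm: "eqm M a a' \<Longrightarrow> (\<And>i. eqm M (f i) (f' i)) \<Longrightarrow> eqm M (brace pr n a f) (brace pr n a' f')"
proof (induction n arbitrary: f f')
  case 0 then show ?case by simp
next
  case (Suc n)
  have 1: "eqm M (brace pr n a f) (brace pr n a' f')" by (rule Suc.IH[OF Suc.prems])
  have 2: "eqm M (brace pr n a (f(i := pr (f i) (f n)))) (brace pr n a' (f'(i := pr (f' i) (f' n))))" for i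
    by (rule Suc.IH[OF Suc.prems(1)]) (simp add: Suc.prems eqm_pr)
  show ?case unfolding brace.simps
    by (intro eqm_diff eqm_pr eqm_sum 1 2 Suc.prems)
qed

lemma brace_expand_gen:
  assumes "j \<le> n" "finite K"
  shows "brace pr n a (\<lambda>i. if i < j then (\<Sum>k\<in>K. w k) else f i)
     = (\<Sum>g\<in>PiE {..<j} (\<lambda>_. K). brace pr n a (\<lambda>i. if i < j then w (g i) else f i))"
  using assms(1)
proof (induction j arbitrary: f)
  case 0 then show ?case by simp
next
  case (Suc j)
  let ?T = "\<Sum>k\<in>K. w k"
  have j: "j < n" using Suc.prems by simp
  have e1: "(\<lambda>i. if i < Suc j then ?T else f i) = (\<lambda>i. if i < j then ?T else (f(j := ?T)) i)"
    by (auto simp: fun_eq_iff)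
  have e2: "(\<lambda>i. if i < j then w (g i) else (f(j := ?T)) i) = (\<lambda>i. if i < j then w (g i) else f i)(j := ?T)" for g
    by (auto simp: fun_eq_iff)
  have e3: "(\<lambda>i. if i < j then w (g i) else f i)(j := w k) = (\<lambda>i. if i < Suc j then w ((g(j := k)) i) else f i)" for g k
    by (auto simp: fun_eq_iff)
  have "brace pr n a (\<lambda>i. if i < Suc j then ?T else f i)
     = (\<Sum>g\<in>PiE {..<j} (\<lambda>_. K). brace pr n a (\<lambda>i. if i < j then w (g i) else (f(j := ?T)) i))"
    unfolding e1 by (rule Suc.IH) (use Suc.prems in simp)
  also have "\<dots> = (\<Sum>g\<in>PiE {..<j} (\<lambda>_. K). \<Sum>k\<in>K. brace pr n a (\<lambda>i. if i < Suc j then w ((g(j := k)) i) else f i))"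
    unfolding e2 brace_sum[OF j assms(2)] e3 ..
  also have "\<dots> = (\<Sum>k\<in>K. \<Sum>g\<in>PiE {..<j} (\<lambda>_. K). brace pr n a (\<lambda>i. if i < Suc j then w ((g(j := k)) i) else f i))"
    by (rule sum.swap)
  also have "\<dots> = (\<Sum>(k, g)\<in>K \<times> PiE {..<j} (\<lambda>_. K). brace pr n a (\<lambda>i. if i < Suc j then w ((g(j := k)) i) else f i))"
    by (rule sum.cartesian_product)
  also have "\<dots> = (\<Sum>h\<in>(\<lambda>(y, g). g(j := y)) ` (K \<times> PiE {..<j} (\<lambda>_. K)). brace pr n a (\<lambda>i. if i < Suc j then w (h i) else f i))"
    by (subst sum.reindex[OF inj_combinator]) (simp_all add: split_def)
  also have "(\<lambda>(y, g). g(j := y)) ` (K \<times> PiE {..<j} (\<lambda>_. K)) = PiE {..<Suc j} (\<lambda>_. K)"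
    unfolding lessThan_Suc by (rule PiE_insert_eq[symmetric])
  finally show ?case .
qed

lemma brace_expand:
  assumes "finite K"
  shows "brace pr n a (\<lambda>_. (\<Sum>k\<in>K. w k)) = (\<Sum>g\<in>PiE {..<n} (\<lambda>_. K). brace pr n a (\<lambda>i. w (g i)))"
proof -
  have "brace pr n a (\<lambda>_. (\<Sum>k\<in>K. w k)) = brace pr n a (\<lambda>i. if i < n then (\<Sum>k\<in>K. w k) else 0)"
    by (rule brace_cong) simp
  also have "\<dots> = (\<Sum>g\<in>PiE {..<n} (\<lambda>_. K). brace pr n a (\<lambda>i. if i < n then w (g i) else 0))"
    by (rule brace_expand_gen[OF le_refl assms])
  also have "\<dots> = (\<Sum>g\<in>PiE {..<n} (\<lambda>_. K). brace pr n a (\<lambda>i. w (g i)))"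
    by (rule sum.cong[OF refl], rule brace_cong) simp
  finally show ?thesis .
qed

lemma regroup:
  assumes hiB: "\<And>g. hi (\<Sum>i<n. g i) (B g)"
  shows "eqm M (\<Sum>g\<in>PiE {..<n} (\<lambda>_. {1..M}). B g) (\<Sum>N\<le>M. \<Sum>g\<in>Cset n N. B g)"
proof -
  let ?A = "PiE {..<n} (\<lambda>_. {1..M})"
  have fA: "finite ?A" by (auto intro: finite_PiE)
  have split: "(\<Sum>g\<in>?A. B g) = (\<Sum>g\<in>{g\<in>?A. (\<Sum>i<n. g i) \<le> M}. B g) + (\<Sum>g\<in>{g\<in>?A. \<not> (\<Sum>i<n. g i) \<le> M}. B g)"
    by (rule sum_split[OF fA])
  have z: "eqm M (\<Sum>g\<in>{g\<in>?A. \<not> (\<Sum>i<n. g i) \<le> M}. B g) 0"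
    unfolding eqm_0
  proof (rule hi_sum)
    fix g assume "g \<in> {g\<in>?A. \<not> (\<Sum>i<n. g i) \<le> M}"
    then have "Suc M \<le> (\<Sum>i<n. g i)" by simp
    then show "hi (Suc M) (B g)" by (rule hi_mono[OF hiB])
  qed
  have grp: "(\<Sum>N\<le>M. \<Sum>g\<in>{g\<in>{g\<in>?A. (\<Sum>i<n. g i) \<le> M}. (\<Sum>i<n. g i) = N}. B g) = (\<Sum>g\<in>{g\<in>?A. (\<Sum>i<n. g i) \<le> M}. B g)"
  proof (rule sum.group)
    show "finite {g\<in>?A. (\<Sum>i<n. g i) \<le> M}" by (rule finite_subset[OF _ fA]) blast
  qed auto
  have cs: "{g\<in>{g\<in>?A. (\<Sum>i<n. g i) \<le> M}. (\<Sum>i<n. g i) = N} = Cset n N" if "N \<le> M" for N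
  proof
    show "{g\<in>{g\<in>?A. (\<Sum>i<n. g i) \<le> M}. (\<Sum>i<n. g i) = N} \<subseteq> Cset n N"
    proof
      fix g assume g: "g \<in> {g\<in>{g\<in>?A. (\<Sum>i<n. g i) \<le> M}. (\<Sum>i<n. g i) = N}"
      have "g i \<le> N" if "i < n" for i
      proof -
        have "g i \<le> (\<Sum>i<n. g i)" by (rule member_le_sum) (use that in auto)
        then show ?thesis using g by simp
      qed
      then show "g \<in> Cset n N" using g by (auto simp: Cset_mem PiE_def Pi_def extensional_def)
    qed
    show "Cset n N \<subseteq> {g\<in>{g\<in>?A. (\<Sum>i<n. g i) \<le> M}. (\<Sum>i<n. g i) = N}"
    proof
      fix g assume g: "g \<in> Cset n N"
      have v: "1 \<le> g i \<and> g i \<le> M" if "i < n" for i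
        using g that \<open>N \<le> M\<close> unfolding Cset_mem by (meson order_trans)
      have ex: "g i = undefined" if "n \<le> i" for i using g that unfolding Cset_mem by blast
      have sN: "(\<Sum>i<n. g i) = N" using g unfolding Cset_mem by blast
      have "g \<in> ?A" unfolding PiE_iff extensional_def using v ex by auto
      then show "g \<in> {g\<in>{g\<in>?A. (\<Sum>i<n. g i) \<le> M}. (\<Sum>i<n. g i) = N}" using sN \<open>N \<le> M\<close> by simp
    qed
  qed
  have "(\<Sum>N\<le>M. \<Sum>g\<in>Cset n N. B g) = (\<Sum>g\<in>{g\<in>?A. (\<Sum>i<n. g i) \<le> M}. B g)"
    unfolding grp[symmetric]
  proof (rule sum.cong[OF refl])
    fix N assume "N \<in> {..M}"
    then have N: "N \<le> M" by simp
    show "(\<Sum>g\<in>Cset n N. B g) = (\<Sum>g\<in>{g\<in>{g\<in>?A. (\<Sum>i<n. g i) \<le> M}. (\<Sum>i<n. g i) = N}. B g)"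
      by (simp only: cs[OF N])
  qed
  moreover have "eqm M (\<Sum>g\<in>?A. B g) ((\<Sum>g\<in>{g\<in>?A. (\<Sum>i<n. g i) \<le> M}. B g) + 0)"
    unfolding split by (rule eqm_add[OF eqm_refl z])
  ultimately show ?thesis by (simp only: add_0_right)
qed

lemma partial_stable:
  assumes hF: "\<And>n. hi n (F n)" and jM: "j \<le> M"
  shows "prj j (\<Sum>n\<le>M. F n) = prj j (\<Sum>n\<le>j. F n)"
proof -
  have u: "{..M} = {..j} \<union> {j<..M}" using jM by auto
  have "(\<Sum>n\<le>M. F n) = (\<Sum>n\<le>j. F n) + (\<Sum>n\<in>{j<..M}. F n)"
    unfolding u by (rule sum.union_disjoint) auto
  moreover have "prj j (\<Sum>n\<in>{j<..M}. F n) = 0"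
    unfolding pr_simps(12)
  proof (rule sum.neutral, rule ballI)
    fix n assume "n \<in> {j<..M}"
    then have "j < n" by simp
    then show "prj j (F n) = 0" using hF[of n] unfolding hi_def by blast
  qed
  ultimately show ?thesis by (simp only: prjl add_0_right)
qed

lemma wsums_iff:
  assumes hF: "\<And>n. hi n (F n)"
  shows "wsums prj F L \<longleftrightarrow> (\<forall>m. prj m L = prj m (\<Sum>n\<le>m. F n))"
proof -
  have ps: "prj m (\<Sum>n<K. F n) = prj m (\<Sum>n\<le>m. F n)" if "m < K" for m K
  proof -
    have "{..<K} = {..K - 1}" using that by auto
    then have "(\<Sum>n<K. F n) = (\<Sum>n\<le>K - 1. F n)" by simp
    moreover have "m \<le> K - 1" using that by simp
    ultimately show ?thesis using partial_stable[OF hF, of m "K - 1"] by simp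
  qed
  show ?thesis
  proof
    assume w: "wsums prj F L"
    show "\<forall>m. prj m L = prj m (\<Sum>n\<le>m. F n)"
    proof
      fix m
      obtain N where N: "\<forall>K\<ge>N. prj m (\<Sum>n<K. F n) = prj m L" using w unfolding wsums_def by blast
      have "prj m L = prj m (\<Sum>n<max N (Suc m). F n)" using N by simp
      also have "\<dots> = prj m (\<Sum>n\<le>m. F n)" by (rule ps) simp
      finally show "prj m L = prj m (\<Sum>n\<le>m. F n)" .
    qed
  next
    assume h: "\<forall>m. prj m L = prj m (\<Sum>n\<le>m. F n)"
    show "wsums prj F L" unfolding wsums_def
    proof
      fix m show "\<exists>N. \<forall>K\<ge>N. prj m (\<Sum>n<K. F n) = prj m L"
      proof (intro exI[of _ "Suc m"] allI impI)
        fix K assume "Suc m \<le> K"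
        then show "prj m (\<Sum>n<K. F n) = prj m L" by (subst ps) (simp_all add: h)
      qed
    qed
  qed
qed

lemma wsums_ex1:
  assumes hF: "\<And>n. hi n (F n)"
  shows "\<exists>!L. wsums prj F L"
proof -
  obtain L where L: "\<forall>m. prj m L = prj m (\<Sum>n\<le>m. F n)"
    using prj_ex[of "\<lambda>m. prj m (\<Sum>n\<le>m. F n)"] prj_wt by blast
  show ?thesis
  proof (rule ex1I[of _ L])
    show "wsums prj F L" using L by (simp add: wsums_iff[OF hF])
    show "L' = L" if "wsums prj F L'" for L'
      using that L by (rule_tac prj_ext) (simp add: wsums_iff[OF hF])
  qed
qed

lemma the_wsums_eqm:
  assumes hF: "\<And>n. hi n (F n)"
  shows "eqm M (THE L. wsums prj F L) (\<Sum>n\<le>M. F n)"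
proof -
  have "wsums prj F (THE L. wsums prj F L)" by (rule theI'[OF wsums_ex1[OF hF]])
  then have "\<forall>m. prj m (THE L. wsums prj F L) = prj m (\<Sum>n\<le>m. F n)" by (simp add: wsums_iff[OF hF])
  then show ?thesis unfolding eqm_def
  proof (intro allI impI)
    fix j assume h: "\<forall>m. prj m (THE L. wsums prj F L) = prj m (\<Sum>n\<le>m. F n)" and j: "j \<le> M"
    show "prj j (THE L. wsums prj F L) = prj j (\<Sum>n\<le>M. F n)"
      unfolding partial_stable[OF hF j] using h by blast
  qed
qed

end

context PL begin

lemma Rt_eq: "Rt l = (\<lambda>x. pr x l)" by (rule ext) (simp add: Rt_def)

lemma Wt_0: "Wt l 0 = one" by (simp add: Wt_def)

lemma ad_hi: "hi 1 l \<Longrightarrow> hi r z \<Longrightarrow> hi (r + 1) (ad pr l z)"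
  unfolding ad_def using hi_pr[of 1 l r z] hi_pr[of r z 1 l] by (auto intro: hi_diff simp: add.commute)

lemma ad_pow_hi: "hi 1 l \<Longrightarrow> hi r z \<Longrightarrow> hi (r + n) ((ad pr l ^^ n) z)"
proof (induction n)
  case 0 then show ?case by simp
next
  case (Suc n) then show ?case using ad_hi[of l "r + n"] by simp
qed

lemma stepJ:
  assumes l: "l \<in> hdeg 0" and al: "alpha \<in> hdeg k"
  shows "(\<Sum>p\<le>n. scale (1 / fact p) ((Rt (- l) ^^ p) (pr (Wt l (n - p)) alpha)))
       = scale (1 / fact n) ((ad pr l ^^ n) alpha)"
proof -
  have "scale (1 / fact n) ((ad pr l ^^ n) alpha) = scale (1 / fact n) (pr one ((ad pr l ^^ n) alpha))"
    by (simp add: one_l)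
  also have "\<dots> = (\<Sum>p\<le>n. scale (1 / fact n * of_nat (n choose p)) ((Rt (- l) ^^ p) (pr (ppow pr one l (n - p)) alpha)))"
    unfolding adR[OF l al] Rt_pow_one by (simp add: scale_sum_right)
  also have "\<dots> = (\<Sum>p\<le>n. scale (1 / fact p) ((Rt (- l) ^^ p) (pr (Wt l (n - p)) alpha)))"
  proof (rule sum.cong[OF refl])
    fix p assume "p \<in> {..n}"
    then have pn: "p \<le> n" by simp
    have c: "(1 / fact n * of_nat (n choose p) :: 'k) = 1 / fact p * (1 / fact (n - p))"
      unfolding binomial_fact[OF pn] by (simp add: field_simps)
    show "scale (1 / fact n * of_nat (n choose p)) ((Rt (- l) ^^ p) (pr (ppow pr one l (n - p)) alpha)) =
         scale (1 / fact p) ((Rt (- l) ^^ p) (pr (Wt l (n - p)) alpha))"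
      unfolding c Wt_def by (simp add: Rt_pow_scale del: ppow.simps)
  qed
  finally show ?thesis ..
qed

lemma stepI:
  assumes hH: "\<And>i j. hi (i + j) (H i j)"
  shows "eqm M (\<Sum>N\<le>M. \<Sum>q\<le>M. H N q) (\<Sum>n\<le>M. \<Sum>p\<le>n. H p (n - p))"
proof -
  let ?B = "{..M} \<times> {..M}"
  let ?A = "{(i, j). i + j \<le> M}"
  have sub: "?A \<subseteq> ?B" by auto
  have "(\<Sum>N\<le>M. \<Sum>q\<le>M. H N q) = (\<Sum>(i, j)\<in>?B. H i j)" by (rule sum.cartesian_product)
  also have "\<dots> = (\<Sum>(i, j)\<in>?B - ?A. H i j) + (\<Sum>(i, j)\<in>?A. H i j)"
    by (rule sum.subset_diff[OF sub]) simp
  also have "(\<Sum>(i, j)\<in>?A. H i j) = (\<Sum>n\<le>M. \<Sum>p\<le>n. H p (n - p))" by (rule sum.triangle_reindex_eq)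
  finally have e: "(\<Sum>N\<le>M. \<Sum>q\<le>M. H N q) = (\<Sum>(i, j)\<in>?B - ?A. H i j) + (\<Sum>n\<le>M. \<Sum>p\<le>n. H p (n - p))" .
  have z: "eqm M (\<Sum>(i, j)\<in>?B - ?A. H i j) 0"
    unfolding eqm_0
  proof (rule hi_sum)
    fix x assume "x \<in> ?B - ?A"
    then obtain i j where x: "x = (i, j)" and ij: "M < i + j" by auto
    show "hi (Suc M) (case x of (i, j) \<Rightarrow> H i j)" unfolding x using hi_mono[OF hH[of i j]] ij by simp
  qed
  show ?thesis unfolding e using eqm_add[OF z eqm_refl] by simp
qed

lemma main_trunc:
  assumes l: "lam \<in> hdeg 0" and l1: "hi 1 lam" and al: "alpha \<in> hdeg k"
  defines "E \<equiv> THE L. wsums prj (Wt lam) L"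
    and "Em \<equiv> THE L. wsums prj (Wt (- lam)) L"
  shows "eqm M (\<Sum>n\<le>M. scale (1 / fact n) (brace pr n (pr E alpha) (\<lambda>_. Em - one)))
               (\<Sum>n\<le>M. scale (1 / fact n) ((ad pr lam ^^ n) alpha))"
proof -
  let ?mu = "- lam"
  have mu: "?mu \<in> hdeg 0" using l by (rule h_neg)
  have mu1: "hi 1 ?mu" using l1 by (rule hi_neg)
  define a' where "a' = pr (\<Sum>q\<le>M. Wt lam q) alpha"
  define T where "T = (\<Sum>k\<in>{1..M}. Wt ?mu k)"
  have Eq: "eqm M E (\<Sum>q\<le>M. Wt lam q)" unfolding E_def by (rule the_wsums_eqm) (rule Wt_hi[OF l1])
  have Emq: "eqm M Em (\<Sum>q\<le>M. Wt ?mu q)" unfolding Em_def by (rule the_wsums_eqm) (rule Wt_hi[OF mu1])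
  have sT: "(\<Sum>q\<le>M. Wt ?mu q) = one + T"
  proof -
    have "{..M} = insert 0 {1..M}" by auto
    then show ?thesis unfolding T_def by (simp add: Wt_0)
  qed
  have c1: "eqm M (Em - one) T" using eqm_diff[OF Emq eqm_refl[of M one]] unfolding sT by simp
  have a: "eqm M (pr E alpha) a'" unfolding a'_def by (rule eqm_pr[OF Eq eqm_refl])
  have C: "eqm M (\<Sum>n\<le>M. scale (1 / fact n) (brace pr n (pr E alpha) (\<lambda>_. Em - one)))
                (\<Sum>n\<le>M. scale (1 / fact n) (brace pr n a' (\<lambda>_. T)))"
    by (intro eqm_sum eqm_scale brace_eqm a c1)
  have hia': "hi 0 a'" by simp
  have DE: "eqm M (brace pr n a' (\<lambda>_. T)) (\<Sum>N\<le>M. \<Sum>g\<in>Cset n N. Bg ?mu n a' g)" for n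
  proof -
    have "brace pr n a' (\<lambda>_. T) = (\<Sum>g\<in>PiE {..<n} (\<lambda>_. {1..M}). Bg ?mu n a' g)"
      unfolding T_def Bg_def by (rule brace_expand) simp
    moreover have "eqm M (\<Sum>g\<in>PiE {..<n} (\<lambda>_. {1..M}). Bg ?mu n a' g) (\<Sum>N\<le>M. \<Sum>g\<in>Cset n N. Bg ?mu n a' g)"
    proof (rule regroup)
      fix g
      show "hi (\<Sum>i<n. g i) (Bg ?mu n a' g)"
        using brace_hi[of n g "\<lambda>i. Wt ?mu (g i)" 0 a'] Wt_hi[OF mu1] hia' unfolding Bg_def by simp
    qed
    ultimately show ?thesis by simp
  qed
  have DE': "eqm M (\<Sum>n\<le>M. scale (1 / fact n) (brace pr n a' (\<lambda>_. T)))
       (\<Sum>n\<le>M. scale (1 / fact n) (\<Sum>N\<le>M. \<Sum>g\<in>Cset n N. Bg ?mu n a' g))"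
    by (intro eqm_sum eqm_scale DE)
  have F: "(\<Sum>n\<le>M. scale (1 / fact n) (\<Sum>N\<le>M. \<Sum>g\<in>Cset n N. Bg ?mu n a' g))
      = (\<Sum>N\<le>M. scale (1 / fact N) ((Rt ?mu ^^ N) a'))"
  proof -
    have "(\<Sum>n\<le>M. scale (1 / fact n) (\<Sum>N\<le>M. \<Sum>g\<in>Cset n N. Bg ?mu n a' g))
        = (\<Sum>n\<le>M. \<Sum>N\<le>M. scale (1 / fact n) (\<Sum>g\<in>Cset n N. Bg ?mu n a' g))"
      by (simp only: scale_sum_right)
    also have "\<dots> = (\<Sum>N\<le>M. \<Sum>n\<le>M. scale (1 / fact n) (\<Sum>g\<in>Cset n N. Bg ?mu n a' g))"
      by (rule sum.swap)
    also have "\<dots> = (\<Sum>N\<le>M. phi ?mu N a')"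
    proof (rule sum.cong[OF refl])
      fix N assume "N \<in> {..M}"
      then have NM: "{..N} \<subseteq> {..M}" by auto
      show "(\<Sum>n\<le>M. scale (1 / fact n) (\<Sum>g\<in>Cset n N. Bg ?mu n a' g)) = phi ?mu N a'"
        unfolding phi_def by (rule sum.mono_neutral_right[OF _ NM]) (auto simp: Cset_empty)
    qed
    also have "\<dots> = (\<Sum>N\<le>M. scale (1 / fact N) ((Rt ?mu ^^ N) a'))"
      by (rule sum.cong[OF refl]) (simp add: phi_R[OF mu] Rt_eq)
    finally show ?thesis .
  qed
  define H where "H N q = scale (1 / fact N) ((Rt ?mu ^^ N) (pr (Wt lam q) alpha))" for N q
  have Hs: "(\<Sum>N\<le>M. scale (1 / fact N) ((Rt ?mu ^^ N) a')) = (\<Sum>N\<le>M. \<Sum>q\<le>M. H N q)"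
    unfolding a'_def H_def by (simp add: Rt_pow_sum scale_sum_right)
  have hH: "hi (i + j) (H i j)" for i j
  proof -
    have "hi (j + 0) (pr (Wt lam j) alpha)" by (rule hi_pr[OF Wt_hi[OF l1]]) simp
    then have "hi (j + i) ((Rt ?mu ^^ i) (pr (Wt lam j) alpha))" using Rt_pow_hi[OF mu1] by simp
    then show ?thesis unfolding H_def by (simp add: hi_scale add.commute)
  qed
  have J: "(\<Sum>n\<le>M. \<Sum>p\<le>n. H p (n - p)) = (\<Sum>n\<le>M. scale (1 / fact n) ((ad pr lam ^^ n) alpha))"
    unfolding H_def by (rule sum.cong[OF refl], rule stepJ[OF l al])
  have I: "eqm M (\<Sum>N\<le>M. \<Sum>q\<le>M. H N q) (\<Sum>n\<le>M. \<Sum>p\<le>n. H p (n - p))" by (rule stepI) (rule hH)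
  have K: "eqm M (\<Sum>n\<le>M. scale (1 / fact n) (\<Sum>N\<le>M. \<Sum>g\<in>Cset n N. Bg ?mu n a' g))
               (\<Sum>n\<le>M. scale (1 / fact n) ((ad pr lam ^^ n) alpha))"
    unfolding F Hs J[symmetric] by (rule I)
  show ?thesis by (rule eqm_trans[OF C eqm_trans[OF DE' K]])
qed

end


lemma PL_from:
  fixes scale :: "'k::field_char_0 \<Rightarrow> 'a::ab_group_add \<Rightarrow> 'a"
    and pr :: "'a \<Rightarrow> 'a \<Rightarrow> 'a" and one :: 'a and d :: "'a \<Rightarrow> 'a"
    and hdeg :: "int \<Rightarrow> 'a set" and wt :: "nat \<Rightarrow> 'a set" and prj :: "nat \<Rightarrow> 'a \<Rightarrow> 'a"
  assumes A: "wg_dg_preLie scale pr one d hdeg wt prj"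
  shows "PL scale pr one hdeg wt prj"
proof -
  note B = A[unfolded wg_dg_preLie_def]
  have 1: "vector_space scale" using B by (elim conjE) assumption
  have 2: "\<forall>x. Vector_Spaces.linear scale scale (pr x)" using B by (elim conjE) assumption
  have 3: "\<forall>y. Vector_Spaces.linear scale scale (\<lambda>x. pr x y)" using B by (elim conjE) assumption
  have 4: "\<forall>k. module.subspace scale (hdeg k)" using B by (elim conjE) assumption
  have 5: "\<forall>n. Vector_Spaces.linear scale scale (prj n)" using B by (elim conjE) assumption
  have 6: "\<forall>n x. prj n x \<in> wt n" using B by (elim conjE) assumption
  have 7: "\<forall>n m x. x \<in> wt m \<longrightarrow> prj n x = (if n = m then x else 0)" using B by (elim conjE) assumption
  have 8: "\<forall>x y. (\<forall>n. prj n x = prj n y) \<longrightarrow> x = y" using B by (elim conjE) assumption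
  have 9: "\<forall>f. (\<forall>n. f n \<in> wt n) \<longrightarrow> (\<exists>x. \<forall>n. prj n x = f n)" using B by (elim conjE) assumption
  have 10: "\<forall>p q x y. x \<in> hdeg p \<and> y \<in> hdeg q \<longrightarrow> pr x y \<in> hdeg (p + q)" using B by (elim conjE) assumption
  have 11: "\<forall>n x y. prj n (pr x y) = (\<Sum>i\<le>n. pr (prj i x) (prj (n - i) y))" using B by (elim conjE) assumption
  have 12: "one \<in> wt 0" using B by (elim conjE) assumption
  have 13: "one \<in> hdeg 0" using B by (elim conjE) assumption
  have 14: "\<forall>x. pr one x = x" using B by (elim conjE) assumption
  have 15: "\<forall>x y z p q. y \<in> hdeg p \<and> z \<in> hdeg q \<longrightarrow>
        pr (pr x y) z - pr x (pr y z) = sgn_deg (p * q) (pr (pr x z) y - pr x (pr z y))" using B by (elim conjE) assumption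
  have h10: "\<forall>p q x y. x \<in> hdeg p \<longrightarrow> y \<in> hdeg q \<longrightarrow> pr x y \<in> hdeg (p + q)" using 10 by blast
  have h15: "\<forall>x y z p q. y \<in> hdeg p \<longrightarrow> z \<in> hdeg q \<longrightarrow>
        pr (pr x y) z - pr x (pr y z) = sgn_deg (p * q) (pr (pr x z) y - pr x (pr z y))" using 15 by blast
  show ?thesis unfolding PL_def
    using 1 2 3 4 5 6 7 8 9 h10 11 12 13 14 h15 by (intro conjI) assumption+
qed

theorem proposition4p7:
  fixes scale :: "'k::field_char_0 \<Rightarrow> 'a::ab_group_add \<Rightarrow> 'a"
    and pr :: "'a \<Rightarrow> 'a \<Rightarrow> 'a" and one :: 'a and d :: "'a \<Rightarrow> 'a"
    and hdeg :: "int \<Rightarrow> 'a set" and wt :: "nat \<Rightarrow> 'a set" and prj :: "nat \<Rightarrow> 'a \<Rightarrow> 'a"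
    and alpha lam :: 'a
  assumes A: "wg_dg_preLie scale pr one d hdeg wt prj"
    and MC_deg: "alpha \<in> hdeg (-1)"
    and MC: "lie_br pr (-1) (-1) alpha alpha = 0"
    and lam_deg: "lam \<in> hdeg 0"
    and lam_g: "prj 0 lam = 0"
  shows "wsums prj (\<lambda>n. scale (1 / fact n) ((ad pr lam ^^ n) alpha))
           (circ scale pr one prj (pr (pexp scale pr one prj lam) alpha) (pexp scale pr one prj (- lam)))"
proof -
  interpret PL scale pr one hdeg wt prj by (rule PL_from[OF A])
  have l1: "hi 1 lam" using lam_g by (simp add: hi_def)
  have pe: "pexp scale pr one prj l = (THE L. wsums prj (Wt l) L)" for l
  proof -
    have "(\<lambda>n. scale (1 / fact n) (ppow pr one l n)) = Wt l" by (rule ext) (simp add: Wt_def)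
    then show ?thesis unfolding pexp_def by simp
  qed
  define E where "E = (THE L. wsums prj (Wt lam) L)"
  define Em where "Em = (THE L. wsums prj (Wt (- lam)) L)"
  define F where "F n = scale (1 / fact n) ((ad pr lam ^^ n) alpha)" for n
  define G where "G n = scale (1 / fact n) (brace pr n (pr E alpha) (\<lambda>_. Em - one))" for n
  have hF: "hi n (F n)" for n
    unfolding F_def using ad_pow_hi[OF l1, of 0 alpha n] by (simp add: hi_scale)
  have Em0: "eqm 0 Em (\<Sum>q\<le>0. Wt (- lam) q)" unfolding Em_def
    by (rule the_wsums_eqm) (rule Wt_hi, rule hi_neg[OF l1])
  have h1: "hi 1 (Em - one)" using Em0 by (simp add: eqm_def hi_def Wt_0)
  have hG: "hi n (G n)" for n
    unfolding G_def using brace_hi[of n "\<lambda>_. 1" "\<lambda>_. Em - one" 0 "pr E alpha"] h1 by (simp add: hi_scale)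
  have circ_eq: "circ scale pr one prj (pr (pexp scale pr one prj lam) alpha) (pexp scale pr one prj (- lam))
      = (THE L. wsums prj G L)"
    unfolding circ_def pe E_def[symmetric] Em_def[symmetric] G_def ..
  have "wsums prj F (THE L. wsums prj G L)"
    unfolding wsums_iff[OF hF]
  proof
    fix m
    have 1: "eqm m (THE L. wsums prj G L) (\<Sum>n\<le>m. G n)" by (rule the_wsums_eqm[OF hG])
    have 2: "eqm m (\<Sum>n\<le>m. G n) (\<Sum>n\<le>m. F n)"
      unfolding G_def F_def E_def Em_def by (rule main_trunc[OF lam_deg l1 MC_deg])
    show "prj m (THE L. wsums prj G L) = prj m (\<Sum>n\<le>m. F n)"
      using eqm_trans[OF 1 2] unfolding eqm_def by simp
  qed
  then show ?thesis unfolding circ_eq F_def .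
qed


end
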